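(* Let $a$ be a complex number of modulus one and let $H$ be a $6\times 6$ complex Hadamard matrix all of whose entries lie in $\{1,a,-a\}$. Then $H$ is complex equivalent to $$H^{(1)}=\begin{bmatrix} i&1&1&1&1&1\\ 1&i&1&1&-1&-1\\ 1&1&i&-1&1&-1\\ 1&1&-1&i&-1&1\\ 1&-1&1&-1&i&1\\ 1&-1&-1&1&1&i \end{bmatrix}.$$
   Context: A complex Hadamard matrix (CHM) of order $n$ is an $n\times n$ complex matrix $H$ all of whose entries have modulus one and which satisfies $HH^\dagger=nI$. A monomial unitary matrix is a unitary matrix each of whose rows and columns has exactly one nonzero entry, that entry having modulus one. Two $n\times n$ matrices $U,V$ are complex equivalent if $U=PVQ$ for some $n\times n$ monomial unitary matrices $P,Q$. *)

theory Defs
  imports "HOL-Analysis.Analysis"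
begin

definition conj_transpose :: "complex^'n^'m \<Rightarrow> complex^'m^'n" where
  "conj_transpose A = (\<chi> i j. cnj (A $ j $ i))"

definition complex_hadamard :: "complex^'n^'n \<Rightarrow> bool" where
  "complex_hadamard H \<longleftrightarrow>
     (\<forall>i j. norm (H $ i $ j) = 1) \<and>
     H ** conj_transpose H = of_nat CARD('n) *\<^sub>R mat 1"

definition monomial_unitary :: "complex^'n^'n \<Rightarrow> bool" where
  "monomial_unitary P \<longleftrightarrow>
     (\<forall>i. \<exists>!j. P $ i $ j \<noteq> 0) \<and>
     (\<forall>j. \<exists>!i. P $ i $ j \<noteq> 0) \<and>
     (\<forall>i j. P $ i $ j \<noteq> 0 \<longrightarrow> norm (P $ i $ j) = 1)"

definition complex_equivalent :: "complex^'n^'n \<Rightarrow> complex^'n^'n \<Rightarrow> bool" where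
  "complex_equivalent U V \<longleftrightarrow>
     (\<exists>P Q. monomial_unitary P \<and> monomial_unitary Q \<and> U = P ** V ** Q)"

definition H1_list :: "complex list list" where
  "H1_list =
    [[\<i>, 1, 1, 1, 1, 1],
     [1, \<i>, 1, 1, -1, -1],
     [1, 1, \<i>, -1, 1, -1],
     [1, 1, -1, \<i>, -1, 1],
     [1, -1, 1, -1, \<i>, 1],
     [1, -1, -1, 1, 1, \<i>]]"

definition H1 :: "complex^6^6" where
  "H1 = (\<chi> i j. H1_list ! (nat (Rep_bit0 i)) ! (nat (Rep_bit0 j)))"

end

theory Submission
  imports Defs
begin


definition e6 :: "6 list" where "e6 = [0,1,2,3,4,5]"

lemma e6_Rep: "map Rep_bit0 e6 = [0,1,2,3,4,5]"
  by (simp add: e6_def bit0.Rep_numeral bit0.Rep_0 bit0.Rep_1)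

lemma e6_distinct: "distinct e6"
proof -
  have "distinct (map Rep_bit0 e6)" by (simp add: e6_Rep)
  then show ?thesis by (simp add: distinct_map)
qed

lemma e6_len: "length e6 = 6" by (simp add: e6_def)

lemma e6_UNIV: "set e6 = UNIV"
proof -
  have "card (set e6) = 6" using e6_distinct e6_len by (simp add: distinct_card)
  moreover have "CARD(6) = 6" by simp
  ultimately show ?thesis by (metis card_eq_UNIV_imp_eq_UNIV finite_class.finite_UNIV)
qed

definition pos :: "6 \<Rightarrow> nat" where "pos u = nat (Rep_bit0 u)"

lemma pos_e6: "k < 6 \<Longrightarrow> pos (e6 ! k) = k"
proof -
  assume k: "k < 6"
  have "Rep_bit0 (e6 ! k) = [0,1,2,3,4,5] ! k" using k e6_Rep e6_len by (metis nth_map)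
  then show ?thesis using k unfolding pos_def
    by (auto simp: less_Suc_eq numeral_eq_Suc)
qed

lemma pos_lt: "pos u < 6"
proof -
  obtain k where "k < 6" "u = e6 ! k" using e6_UNIV e6_len by (metis UNIV_I in_set_conv_nth)
  then show ?thesis using pos_e6 by simp
qed

lemma e6_pos: "e6 ! pos u = u"
proof -
  obtain k where "k < 6" "u = e6 ! k" using e6_UNIV e6_len by (metis UNIV_I in_set_conv_nth)
  then show ?thesis using pos_e6 by simp
qed

lemma e6_inj: "k < 6 \<Longrightarrow> l < 6 \<Longrightarrow> e6 ! k = e6 ! l \<longleftrightarrow> k = l"
  using pos_e6 by metis

lemma sum_e6: "(\<Sum>j\<in>UNIV. f j) = sum_list (map f e6)"
  using e6_distinct e6_UNIV by (metis sum_list_distinct_conv_sum_set)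



datatype cd = Z | P | N

fun sg :: "cd \<Rightarrow> int" where "sg N = -1" | "sg _ = 1"
fun isO :: "cd \<Rightarrow> bool" where "isO Z = True" | "isO _ = False"
fun rk :: "cd \<Rightarrow> nat" where "rk Z = 0" | "rk P = 1" | "rk N = 2"

fun st :: "cd list \<Rightarrow> cd list \<Rightarrow> int \<times> int \<times> int" where
  "st (x#xs) (y#ys) = (case st xs ys of (A,B,C) \<Rightarrow>
      if isO x = isO y then (A + sg x * sg y, B, C)
      else if isO y then (A, B + sg x, C) else (A, B, C + sg y))"
| "st _ _ = (0,0,0)"

definition cond :: "int \<Rightarrow> cd list \<Rightarrow> cd list \<Rightarrow> bool" where
  "cond m r s = (case st r s of (A,B,C) \<Rightarrow> B = C \<and> A = m * B)"

fun lexless :: "cd list \<Rightarrow> cd list \<Rightarrow> bool" where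
  "lexless (x#xs) (y#ys) = (if x = y then lexless xs ys else rk x < rk y)"
| "lexless _ _ = False"

definition colk :: "nat \<Rightarrow> cd list list \<Rightarrow> cd list" where
  "colk j M = map (\<lambda>r. r ! j) M"

fun colokL :: "nat list \<Rightarrow> cd list list \<Rightarrow> bool" where
  "colokL [] M = True"
| "colokL (j#js) M = (\<not> lexless (colk (Suc j) M) (colk j M) \<and> colokL js M)"

definition colok :: "cd list list \<Rightarrow> bool" where "colok M = colokL [0,1,2,3,4] M"

fun colsokL :: "int \<Rightarrow> (nat \<times> nat) list \<Rightarrow> cd list list \<Rightarrow> bool" where
  "colsokL m [] M = True"
| "colsokL m ((j,k)#ps) M = (cond m (colk j M) (colk k M) \<and> colsokL m ps M)"

definition colsok :: "int \<Rightarrow> cd list list \<Rightarrow> bool" where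
  "colsok m M = colsokL m [(0,1),(0,2),(0,3),(0,4),(0,5),(1,2),(1,3),(1,4),(1,5),(2,3),(2,4),(2,5),(3,4),(3,5),(4,5)] M"

definition gen :: "(cd list \<Rightarrow> bool) \<Rightarrow> cd list list" where
 "gen p = concat (map (\<lambda>x1. concat (map (\<lambda>x2. concat (map (\<lambda>x3. concat (map (\<lambda>x4. concat (map (\<lambda>x5.
     concat (map (\<lambda>x6. if p [x1,x2,x3,x4,x5,x6] then [[x1,x2,x3,x4,x5,x6]] else []) [Z,P,N])) [Z,P,N])) [Z,P,N])) [Z,P,N])) [Z,P,N])) [Z,P,N])"

fun filt :: "int \<Rightarrow> cd list \<Rightarrow> cd list list \<Rightarrow> cd list list" where
  "filt m s [] = []"
| "filt m s (t#ts) = (if lexless s t \<and> cond m s t then t # filt m s ts else filt m s ts)"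

fun srch :: "int \<Rightarrow> nat \<Rightarrow> cd list list \<Rightarrow> cd list list \<Rightarrow> cd list list list"
and srchL :: "int \<Rightarrow> nat \<Rightarrow> cd list list \<Rightarrow> cd list list \<Rightarrow> cd list list \<Rightarrow> cd list list list" where
  "srch m 0 M cs = (if colsok m M then [M] else [])"
| "srch m (Suc n) M cs = srchL m n M cs cs"
| "srchL m n M cs [] = []"
| "srchL m n M cs (s#ss) = (if colok (M @ [s]) then srch m n (M @ [s]) (filt m s cs) else []) @ srchL m n M cs ss"

definition firsts :: "cd list list" where "firsts = gen (\<lambda>r. sorted (map rk r))"

definition topS :: "int \<Rightarrow> cd list list list" where
  "topS m = concat (map (\<lambda>f. srch m 5 [f] (gen (\<lambda>r. lexless f r \<and> cond m f r))) firsts)"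

lemma rk_lt3: "rk x < 3" by (cases x) auto
lemma rk_inj: "rk x = rk y \<longleftrightarrow> x = y" by (cases x; cases y) auto

lemma lexless_iff:
  "lexless x y \<longleftrightarrow> (\<exists>i. i < length x \<and> i < length y \<and> (\<forall>k<i. x!k = y!k) \<and> rk (x!i) < rk (y!i))"
proof (induction x y rule: lexless.induct)
  case (1 x xs y ys)
  show ?case
  proof (cases "x = y")
    case True
    have "(\<exists>i. i < length (x#xs) \<and> i < length (y#ys) \<and> (\<forall>k<i. (x#xs)!k = (y#ys)!k) \<and> rk ((x#xs)!i) < rk ((y#ys)!i))
          \<longleftrightarrow> (\<exists>i. i < length xs \<and> i < length ys \<and> (\<forall>k<i. xs!k = ys!k) \<and> rk (xs!i) < rk (ys!i))"
    proof
      assume "\<exists>i. i < length (x#xs) \<and> i < length (y#ys) \<and> (\<forall>k<i. (x#xs)!k = (y#ys)!k) \<and> rk ((x#xs)!i) < rk ((y#ys)!i)"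
      then obtain i where i: "i < length (x#xs)" "i < length (y#ys)" "\<forall>k<i. (x#xs)!k = (y#ys)!k" "rk ((x#xs)!i) < rk ((y#ys)!i)" by blast
      then have "i \<noteq> 0" using True by (cases i) auto
      then obtain j where j: "i = Suc j" by (cases i) auto
      show "\<exists>i. i < length xs \<and> i < length ys \<and> (\<forall>k<i. xs!k = ys!k) \<and> rk (xs!i) < rk (ys!i)"
        apply (rule exI[of _ j]) using i j by auto
    next
      assume "\<exists>i. i < length xs \<and> i < length ys \<and> (\<forall>k<i. xs!k = ys!k) \<and> rk (xs!i) < rk (ys!i)"
      then obtain i where i: "i < length xs" "i < length ys" "\<forall>k<i. xs!k = ys!k" "rk (xs!i) < rk (ys!i)" by blast
      show "\<exists>i. i < length (x#xs) \<and> i < length (y#ys) \<and> (\<forall>k<i. (x#xs)!k = (y#ys)!k) \<and> rk ((x#xs)!i) < rk ((y#ys)!i)"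
        apply (rule exI[of _ "Suc i"]) using i True by (auto simp: less_Suc_eq_0_disj)
    qed
    then show ?thesis using True 1 by simp
  next
    case False
    then show ?thesis
      apply simp
      apply (rule iffI)
       apply (rule exI[of _ 0]) apply simp
      apply clarify
      subgoal for i by (cases i) (auto simp: rk_inj)
      done
  qed
qed auto

lemma lexless_irrefl: "\<not> lexless x x"
  by (simp add: lexless_iff)

lemma lexless_total: "length x = length y \<Longrightarrow> x \<noteq> y \<Longrightarrow> lexless x y \<or> lexless y x"
proof (induction x y rule: lexless.induct)
  case (1 x xs y ys)
  show ?case
  proof (cases "x = y")
    case True then show ?thesis using 1 by simp
  next
    case False
    then have "rk x \<noteq> rk y" by (simp add: rk_inj)
    then show ?thesis using False by auto
  qed
qed auto

lemma lexless_trans: "lexless x y \<Longrightarrow> lexless y z \<Longrightarrow> lexless x z"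
proof (induction x y arbitrary: z rule: lexless.induct)
  case (1 x xs y ys)
  then obtain w zs where z: "z = w # zs" by (cases z) auto
  have a: "(if x = y then lexless xs ys else rk x < rk y)" using 1(2) by simp
  have b: "(if y = w then lexless ys zs else rk y < rk w)" using 1(3) z by simp
  show ?case
  proof (cases "x = y")
    case True
    show ?thesis
    proof (cases "y = w")
      case True
      then show ?thesis using a b `x = y` 1(1) z by simp
    next
      case False
      then show ?thesis using a b `x = y` z by simp
    qed
  next
    case False
    then have xy: "rk x < rk y" using a by simp
    show ?thesis
    proof (cases "y = w")
      case True
      then show ?thesis using xy False z by simp
    next
      case False
      then have "rk y < rk w" using b by simp
      then have "rk x < rk w" using xy by simp
      moreover then have "x \<noteq> w" by auto
      ultimately show ?thesis using z by simp
    qed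
  qed
qed auto

lemma lexless_take: "lexless (take n x) (take n y) \<Longrightarrow> lexless x y"
proof -
  assume "lexless (take n x) (take n y)"
  then obtain i where i: "i < length (take n x)" "i < length (take n y)" "\<forall>k<i. take n x!k = take n y!k"
     "rk (take n x!i) < rk (take n y!i)" unfolding lexless_iff by blast
  have "i < n" using i(1) by simp
  show ?thesis unfolding lexless_iff
    apply (rule exI[of _ i])
    using i `i < n` by auto
qed

lemma lexlessI: "i < length x \<Longrightarrow> i < length y \<Longrightarrow> (\<And>k. k<i \<Longrightarrow> x!k = y!k) \<Longrightarrow> rk (x!i) < rk (y!i) \<Longrightarrow> lexless x y"
  unfolding lexless_iff by blast


definition numk :: "nat list \<Rightarrow> nat" where "numk xs = foldl (\<lambda>acc d. 3*acc + d) 0 xs"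

lemma foldl_numk: "foldl (\<lambda>acc d. 3*acc + d) (c::nat) xs = c * 3 ^ length xs + foldl (\<lambda>acc d. 3*acc + d) 0 xs"
proof (induction xs arbitrary: c)
  case Nil then show ?case by simp
next
  case (Cons x xs)
  have "foldl (\<lambda>acc d. 3*acc + d) c (x#xs) = foldl (\<lambda>acc d. 3*acc + d) (3*c + x) xs" by simp
  also have "\<dots> = (3*c+x) * 3 ^ length xs + foldl (\<lambda>acc d. 3*acc + d) 0 xs" by (rule Cons)
  also have "foldl (\<lambda>acc d. 3*acc + d) 0 (x#xs) = x * 3 ^ length xs + foldl (\<lambda>acc d. 3*acc + d) 0 xs"
    using Cons[of x] by simp
  ultimately show ?case by (simp add: algebra_simps)
qed

lemma numk_append: "numk (xs @ ys) = numk xs * 3 ^ length ys + numk ys"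
  unfolding numk_def foldl_append by (rule foldl_numk)

lemma numk_Cons: "numk (x # ys) = x * 3 ^ length ys + numk ys"
  using numk_append[of "[x]" ys] by (simp add: numk_def)

lemma numk_bound: "(\<forall>d\<in>set xs. d < 3) \<Longrightarrow> numk xs < 3 ^ length xs"
proof (induction xs)
  case Nil then show ?case by (simp add: numk_def)
next
  case (Cons x xs)
  then have x2: "x \<le> 2" and b: "numk xs < 3 ^ length xs" by auto
  have "x * 3 ^ length xs \<le> 2 * 3 ^ length xs" using x2 by (rule mult_le_mono1)
  then have "numk (x#xs) < 3 * 3 ^ length xs" using b unfolding numk_Cons by linarith
  then show ?case by simp
qed

lemma numk_split: "numk (p @ [d] @ s) = (numk p * 3 + d) * 3 ^ length s + numk s"
proof -
  have "numk (p @ ([d] @ s)) = numk p * 3 ^ (Suc (length s)) + (d * 3 ^ length s + numk s)"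
    by (simp add: numk_append numk_Cons)
  also have "\<dots> = (numk p * 3 + d) * 3 ^ length s + numk s"
    by (simp add: distrib_right mult.assoc)
  finally show ?thesis by simp
qed

lemma numk_less:
  assumes len: "length x = length y" and j: "j < length x"
    and eq: "\<And>i. i < j \<Longrightarrow> x!i = y!i" and lt: "x!j < y!j" and dig: "\<forall>d\<in>set x. d < 3"
  shows "numk x < numk y"
proof -
  have tk: "take j x = take j y" using eq len j by (simp add: nth_take_lemma)
  have x: "x = take j x @ [x!j] @ drop (Suc j) x" using j by (simp add: Cons_nth_drop_Suc)
  have y: "y = take j y @ [y!j] @ drop (Suc j) y" using j len by (simp add: Cons_nth_drop_Suc)
  define r where "r = length x - Suc j"
  have lr: "length (drop (Suc j) x) = r" "length (drop (Suc j) y) = r" using len by (auto simp: r_def)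
  have "\<forall>d\<in>set (drop (Suc j) x). d < 3" using dig by (meson in_set_dropD)
  then have b: "numk (drop (Suc j) x) < 3 ^ r"
    using numk_bound[of "drop (Suc j) x"] lr by simp
  have "numk x = (numk (take j x) * 3 + x!j) * 3 ^ r + numk (drop (Suc j) x)"
    using numk_split[of "take j x" "x!j" "drop (Suc j) x"] x lr by simp
  also have "\<dots> < (numk (take j x) * 3 + x!j) * 3 ^ r + 3 ^ r" using b by simp
  also have "\<dots> = (numk (take j x) * 3 + x!j + 1) * 3 ^ r" by (simp add: distrib_right)
  also have "\<dots> \<le> (numk (take j y) * 3 + y!j) * 3 ^ r" using lt tk by (intro mult_le_mono1) simp
  also have "\<dots> \<le> numk y"
    using numk_split[of "take j y" "y!j" "drop (Suc j) y"] y lr by simp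
  finally show ?thesis .
qed




definition sw :: "6 \<Rightarrow> 6 \<Rightarrow> 6 \<Rightarrow> 6" where
  "sw a b x = (if x = a then b else if x = b then a else x)"

lemma sw_sw: "sw a b (sw a b x) = x" by (auto simp: sw_def)
lemma bij_sw: "bij (sw a b)"
  by (rule o_bij[of "sw a b"]) (auto simp: sw_sw)

definition keyl :: "(6 \<Rightarrow> 6 \<Rightarrow> cd) \<Rightarrow> (6 \<Rightarrow> 6) \<Rightarrow> (6 \<Rightarrow> 6) \<Rightarrow> nat list" where
  "keyl K s p = map (\<lambda>q. rk (K (s (e6!(q div 6))) (p (e6!(q mod 6))))) [0..<36]"

definition RW :: "(6 \<Rightarrow> 6 \<Rightarrow> cd) \<Rightarrow> (6 \<Rightarrow> 6) \<Rightarrow> (6 \<Rightarrow> 6) \<Rightarrow> nat \<Rightarrow> cd list" where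
  "RW K s p k = map (\<lambda>j. K (s (e6!k)) (p j)) e6"

definition CL :: "(6 \<Rightarrow> 6 \<Rightarrow> cd) \<Rightarrow> (6 \<Rightarrow> 6) \<Rightarrow> (6 \<Rightarrow> 6) \<Rightarrow> nat \<Rightarrow> cd list" where
  "CL K s p j = map (\<lambda>u. K (s u) (p (e6!j))) e6"

lemma RW_nth: "t < 6 \<Longrightarrow> RW K s p k ! t = K (s (e6!k)) (p (e6!t))"
  by (simp add: RW_def e6_len)
lemma CL_nth: "t < 6 \<Longrightarrow> CL K s p j ! t = K (s (e6!t)) (p (e6!j))"
  by (simp add: CL_def e6_len)
lemma RW_len: "length (RW K s p k) = 6" by (simp add: RW_def e6_len)
lemma CL_len: "length (CL K s p k) = 6" by (simp add: CL_def e6_len)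

lemma keyl_len: "length (keyl K s p) = 36" by (simp add: keyl_def)
lemma keyl_nth: "r < 6 \<Longrightarrow> c < 6 \<Longrightarrow> keyl K s p ! (6*r + c) = rk (K (s (e6!r)) (p (e6!c)))"
proof -
  assume "r < 6" "c < 6"
  then have "6*r + c < 36" by linarith
  moreover have "(6*r+c) div 6 = r" "(6*r+c) mod 6 = c" using `c<6` by auto
  ultimately show ?thesis by (simp add: keyl_def)
qed
lemma keyl_dig: "\<forall>d\<in>set (keyl K s p). d < 3" by (auto simp: keyl_def rk_lt3)

lemma idx_split: "(i::nat) < 36 \<Longrightarrow> \<exists>r c. r < 6 \<and> c < 6 \<and> i = 6*r + c"
  by (rule exI[of _ "i div 6"], rule exI[of _ "i mod 6"]) auto

lemma sort_exists:
  "\<exists>s p. bij s \<and> bij p \<and> (\<forall>k<5. \<not> lexless (RW K s p (Suc k)) (RW K s p k))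
     \<and> (\<forall>j<5. \<not> lexless (CL K s p (Suc j)) (CL K s p j))"
proof -
  define S where "S = {q::(6\<Rightarrow>6)\<times>(6\<Rightarrow>6). bij (fst q) \<and> bij (snd q)}"
  define f where "f = (\<lambda>q::(6\<Rightarrow>6)\<times>(6\<Rightarrow>6). numk (keyl K (fst q) (snd q)))"
  have fin: "finite S" by simp
  have ne: "(id, id) \<in> S" by (simp add: S_def)
  have finf: "finite (f ` S)" using fin by simp
  have nef: "f ` S \<noteq> {}" using ne by blast
  have "Min (f ` S) \<in> f ` S" using finf nef by (rule Min_in)
  then obtain q where q1: "q \<in> S" and q2: "f q = Min (f ` S)" by auto
  have q3: "\<forall>q'\<in>S. f q \<le> f q'" using finf q2 by simp
  obtain s p where sp: "q = (s,p)" by (cases q)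
  have bs: "bij s" and bp: "bij p" using q1 sp by (auto simp: S_def)
  have minq: "\<And>(s'::6\<Rightarrow>6) (p'::6\<Rightarrow>6). bij s' \<Longrightarrow> bij p' \<Longrightarrow> numk (keyl K s p) \<le> numk (keyl K s' p')"
  proof -
    fix s' p' :: "6 \<Rightarrow> 6" assume "bij s'" "bij p'"
    then have "(s',p') \<in> S" by (simp add: S_def)
    then show "numk (keyl K s p) \<le> numk (keyl K s' p')" using q3 sp by (force simp: f_def)
  qed
  have rows: "\<forall>k<5. \<not> lexless (RW K s p (Suc k)) (RW K s p k)"
  proof (intro allI impI notI)
    fix k assume k: "k < 5" and lx: "lexless (RW K s p (Suc k)) (RW K s p k)"
    then obtain i0 where i0: "i0 < 6" "\<forall>t<i0. RW K s p (Suc k) ! t = RW K s p k ! t"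
      "rk (RW K s p (Suc k) ! i0) < rk (RW K s p k ! i0)"
      unfolding lexless_iff by (auto simp: RW_len)
    define s' where "s' = s \<circ> sw (e6!k) (e6!Suc k)"
    have bs': "bij s'" unfolding s'_def using bs bij_sw by (rule bij_comp[rotated])
    have neq: "e6!k \<noteq> e6!Suc k" using e6_inj k by simp
    have less: "numk (keyl K s' p) < numk (keyl K s p)"
    proof (rule numk_less[where j = "6*k+i0"])
      show "length (keyl K s' p) = length (keyl K s p)" by (simp add: keyl_len)
      show "6*k+i0 < length (keyl K s' p)" using k i0 by (simp add: keyl_len)
      show "\<forall>d\<in>set (keyl K s' p). d < 3" by (rule keyl_dig)
      show "keyl K s' p ! (6*k+i0) < keyl K s p ! (6*k+i0)"
        using i0(3) k i0(1) neq by (simp add: keyl_nth RW_nth s'_def sw_def)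
      fix i assume i: "i < 6*k+i0"
      then obtain r c where rc: "r < 6" "c < 6" "i = 6*r+c" using idx_split[of i] k i0 by auto
      have "r < k \<or> (r = k \<and> c < i0)" using rc i i0 by linarith
      then show "keyl K s' p ! i = keyl K s p ! i"
      proof
        assume "r < k"
        then have "e6!r \<noteq> e6!k" "e6!r \<noteq> e6!Suc k" using e6_inj k rc by auto
        then show ?thesis using rc by (simp add: keyl_nth s'_def sw_def)
      next
        assume "r = k \<and> c < i0"
        then have "RW K s p (Suc k) ! c = RW K s p k ! c" using i0(2) by auto
        then show ?thesis using rc `r = k \<and> c < i0` neq by (simp add: keyl_nth RW_nth s'_def sw_def)
      qed
    qed
    show False using minq[OF bs' bp] less by simp
  qed
  have cols: "\<forall>j<5. \<not> lexless (CL K s p (Suc j)) (CL K s p j)"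
  proof (intro allI impI notI)
    fix j assume j: "j < 5" and lx: "lexless (CL K s p (Suc j)) (CL K s p j)"
    then obtain r0 where r0: "r0 < 6" "\<forall>t<r0. CL K s p (Suc j) ! t = CL K s p j ! t"
      "rk (CL K s p (Suc j) ! r0) < rk (CL K s p j ! r0)"
      unfolding lexless_iff by (auto simp: CL_len)
    define p' where "p' = p \<circ> sw (e6!j) (e6!Suc j)"
    have bp': "bij p'" unfolding p'_def using bp bij_sw by (rule bij_comp[rotated])
    have neq: "e6!j \<noteq> e6!Suc j" using e6_inj j by simp
    have less: "numk (keyl K s p') < numk (keyl K s p)"
    proof (rule numk_less[where j = "6*r0+j"])
      show "length (keyl K s p') = length (keyl K s p)" by (simp add: keyl_len)
      show "6*r0+j < length (keyl K s p')" using j r0 by (simp add: keyl_len)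
      show "\<forall>d\<in>set (keyl K s p'). d < 3" by (rule keyl_dig)
      show "keyl K s p' ! (6*r0+j) < keyl K s p ! (6*r0+j)"
        using r0(3) j r0(1) neq by (simp add: keyl_nth CL_nth p'_def sw_def)
      fix i assume i: "i < 6*r0+j"
      then obtain r c where rc: "r < 6" "c < 6" "i = 6*r+c" using idx_split[of i] j r0 by auto
      have "r < r0 \<or> (r = r0 \<and> c < j)" using rc i j by linarith
      have k1: "keyl K s p' ! i = rk (K (s (e6!r)) (p' (e6!c)))" using keyl_nth[OF rc(1) rc(2)] rc(3) by simp
      have k2: "keyl K s p ! i = rk (K (s (e6!r)) (p (e6!c)))" using keyl_nth[OF rc(1) rc(2)] rc(3) by simp
      have "rk (K (s (e6!r)) (p' (e6!c))) = rk (K (s (e6!r)) (p (e6!c)))"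
        using \<open>r < r0 \<or> (r = r0 \<and> c < j)\<close>
      proof
        assume rr: "r < r0"
        then have ceq: "CL K s p (Suc j) ! r = CL K s p j ! r" using r0(2) by auto
        then have ceq': "K (s (e6!r)) (p (e6!Suc j)) = K (s (e6!r)) (p (e6!j))"
          using rc by (simp add: CL_nth)
        consider "c = j" | "c = Suc j" | "c \<noteq> j \<and> c \<noteq> Suc j" by blast
        then show ?thesis
        proof cases
          case 1 then show ?thesis using rc ceq' by (simp add: p'_def sw_def)
        next
          case 2 then show ?thesis using rc ceq' neq by (simp add: p'_def sw_def)
        next
          case 3
          then have "e6!c \<noteq> e6!j" "e6!c \<noteq> e6!Suc j" using e6_inj j rc by auto
          then show ?thesis using rc by (simp add: p'_def sw_def)
        qed
      next
        assume "r = r0 \<and> c < j"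
        then have "e6!c \<noteq> e6!j" "e6!c \<noteq> e6!Suc j" using e6_inj j rc by auto
        then show ?thesis using rc by (simp add: p'_def sw_def)
      qed
      then show "keyl K s p' ! i = keyl K s p ! i" using k1 k2 by simp
    qed
    show False using minq[OF bs bp'] less by simp
  qed
  show ?thesis using bs bp rows cols by blast
qed




definition val :: "complex \<Rightarrow> cd \<Rightarrow> complex" where
  "val a x = (case x of Z \<Rightarrow> 1 | P \<Rightarrow> a | N \<Rightarrow> -a)"
definition code :: "complex \<Rightarrow> complex \<Rightarrow> cd" where
  "code a z = (if z = 1 then Z else if z = a then P else N)"

lemma val_simps[simp]: "val a Z = 1" "val a P = a" "val a N = -a" by (simp_all add: val_def)

lemma val_code: "z \<in> {1, a, -a} \<Longrightarrow> a \<noteq> 1 \<Longrightarrow> val a (code a z) = z"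
  by (auto simp: code_def)

lemma st_sum:
  assumes "length xs = length ys" and aa: "a * cnj a = 1"
  shows "sum_list (map2 (\<lambda>x y. val a x * cnj (val a y)) xs ys)
     = (case st xs ys of (A,B,C) \<Rightarrow> of_int A + a * of_int B + cnj a * of_int C)"
  using assms(1)
proof (induction xs ys rule: list_induct2)
  case Nil then show ?case by simp
next
  case (Cons x xs y ys)
  obtain A B C where abc: "st xs ys = (A,B,C)" by (cases "st xs ys") auto
  have aa': "cnj a * a = 1" using aa by (simp add: mult.commute)
  show ?case using Cons.IH abc aa aa'
    by (cases x; cases y) (simp_all add: algebra_simps)
qed

lemma stepA: "\<bar>A\<bar>+\<bar>B\<bar>+\<bar>C\<bar> \<le> (n::int) \<Longrightarrow> even (A+B+C+n) \<Longrightarrow> d \<in> {1,-1} \<Longrightarrow>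
   \<bar>A+d\<bar>+\<bar>B\<bar>+\<bar>C\<bar> \<le> n+1 \<and> even ((A+d)+B+C+(n+1))"
proof -
  assume a: "\<bar>A\<bar>+\<bar>B\<bar>+\<bar>C\<bar> \<le> (n::int)" "even (A+B+C+n)" "d \<in> {1,-1}"
  have "\<bar>A+d\<bar> \<le> \<bar>A\<bar> + 1" using a(3) by (auto simp: abs_if)
  moreover have "(A+d)+B+C+(n+1) = (A+B+C+n) + (d + 1)" by simp
  moreover have "even (d+1)" using a(3) by auto
  ultimately show ?thesis using a by auto
qed

lemma stepB: "\<bar>A\<bar>+\<bar>B\<bar>+\<bar>C\<bar> \<le> (n::int) \<Longrightarrow> even (A+B+C+n) \<Longrightarrow> d \<in> {1,-1} \<Longrightarrow>
   \<bar>A\<bar>+\<bar>B+d\<bar>+\<bar>C\<bar> \<le> n+1 \<and> even (A+(B+d)+C+(n+1))"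
  using stepA[of B A C n d] by (simp add: ac_simps)

lemma stepC: "\<bar>A\<bar>+\<bar>B\<bar>+\<bar>C\<bar> \<le> (n::int) \<Longrightarrow> even (A+B+C+n) \<Longrightarrow> d \<in> {1,-1} \<Longrightarrow>
   \<bar>A\<bar>+\<bar>B\<bar>+\<bar>C+d\<bar> \<le> n+1 \<and> even (A+B+(C+d)+(n+1))"
  using stepA[of C B A n d] by (simp add: ac_simps)

lemma sg_pm: "sg x \<in> {1,-1}" by (cases x) auto
lemma sg2_pm: "sg x * sg y \<in> {1,-1}" by (cases x; cases y) auto

lemma st_bounds:
  "length xs = length ys \<Longrightarrow> st xs ys = (A,B,C) \<Longrightarrow>
    \<bar>A\<bar> + \<bar>B\<bar> + \<bar>C\<bar> \<le> int (length xs) \<and> even (A + B + C + int (length xs))"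
proof (induction xs ys arbitrary: A B C rule: list_induct2)
  case Nil then show ?case by simp
next
  case (Cons x xs y ys)
  obtain A' B' C' where abc: "st xs ys = (A',B',C')" by (cases "st xs ys") auto
  have ih: "\<bar>A'\<bar> + \<bar>B'\<bar> + \<bar>C'\<bar> \<le> int (length xs)" "even (A' + B' + C' + int (length xs))"
    using Cons.IH abc by blast+
  have st1: "st (x#xs) (y#ys) = (if isO x = isO y then (A'+sg x * sg y,B',C') else if isO y then (A',B'+sg x,C') else (A',B',C'+sg y))"
    using abc by simp
  have len: "int (length (x#xs)) = int (length xs) + 1" by simp
  show ?case
  proof (cases "isO x = isO y")
    case True
    then have "(A,B,C) = (A'+sg x * sg y,B',C')" using st1 Cons.prems by simp
    then show ?thesis using stepA[OF ih sg2_pm[of x y]] len by simp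
  next
    case F: False
    show ?thesis
    proof (cases "isO y")
      case True
      then have "(A,B,C) = (A',B'+sg x,C')" using st1 Cons.prems F by simp
      then show ?thesis using stepB[OF ih sg_pm[of x]] len by simp
    next
      case False
      then have "(A,B,C) = (A',B',C'+sg y)" using st1 Cons.prems F by simp
      then show ?thesis using stepC[OF ih sg_pm[of y]] len by simp
    qed
  qed
qed

lemma sg_sq[simp]: "sg x * sg x = 1" by (cases x) auto

lemma st_same: "st r r = (int (length r), 0, 0)"
  by (induction r) auto

lemma cond_same: "r \<noteq> [] \<Longrightarrow> \<not> cond m r r"
  by (simp add: cond_def st_same)

lemma sum_map2_map: "sum_list (map2 F (map f xs) (map g xs)) = sum_list (map (\<lambda>j. F (f j) (g j)) xs)"
  by (induction xs) auto

lemma had_rows: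
  assumes "complex_hadamard (H::complex^'n^'n)" "u \<noteq> v"
  shows "(\<Sum>j\<in>UNIV. H$u$j * cnj (H$v$j)) = 0"
proof -
  have "(H ** conj_transpose H) $ u $ v = (of_nat CARD('n) *\<^sub>R mat 1 :: complex^'n^'n) $ u $ v"
    using assms(1) unfolding complex_hadamard_def by simp
  then show ?thesis using assms(2)
    by (simp add: matrix_matrix_mult_def conj_transpose_def mat_def)
qed

lemma had_cols:
  assumes "complex_hadamard (H::complex^'n^'n)" "u \<noteq> v"
  shows "(\<Sum>i\<in>UNIV. H$i$u * cnj (H$i$v)) = 0"
proof -
  let ?c = "real (CARD('n))"
  have c0: "?c \<noteq> 0" by simp
  let ?A = "(1/?c) *\<^sub>R conj_transpose H"
  have "H ** ?A = (1/?c) *\<^sub>R (H ** conj_transpose H)" by (metis matrix_scalar_ac scalar_matrix_assoc)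
  also have "\<dots> = mat 1" using assms(1) c0 unfolding complex_hadamard_def by simp
  finally have "?A ** H = mat 1" using matrix_left_right_inverse by blast
  then have e0: "(?A ** H) $ v $ u = 0" using assms(2) by (simp add: mat_def)
  have "(?A ** H) $ v $ u = (\<Sum>i\<in>UNIV. ((1/?c) *\<^sub>R cnj (H$i$v)) * H$i$u)"
    by (simp add: matrix_matrix_mult_def conj_transpose_def)
  also have "\<dots> = (1/?c) *\<^sub>R (\<Sum>i\<in>UNIV. cnj (H$i$v) * H$i$u)"
    by (simp add: scaleR_sum_right)
  finally have "(1/?c) *\<^sub>R (\<Sum>i\<in>UNIV. cnj (H$i$v) * H$i$u) = 0" using e0 by simp
  then have "(\<Sum>i\<in>UNIV. cnj (H$i$v) * H$i$u) = 0" using c0 by simp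
  then show ?thesis by (simp add: mult.commute)
qed

lemma pair_eq:
  assumes "of_int A + a * of_int B + cnj a * of_int C = (0::complex)" "Im a \<noteq> 0"
  shows "B = C \<and> real_of_int A + 2 * Re a * real_of_int B = 0"
proof -
  have r: "real_of_int A + Re a * real_of_int B + Re a * real_of_int C = 0"
    using arg_cong[OF assms(1), of Re] by simp
  have i: "Im a * real_of_int B - Im a * real_of_int C = 0"
    using arg_cong[OF assms(1), of Im] by simp
  then have "real_of_int B = real_of_int C" using assms(2)
    by (metis eq_iff_diff_eq_0 mult_cancel_left right_diff_distrib)
  then have "B = C" by simp
  then show ?thesis using r by simp
qed

definition mof :: "real \<Rightarrow> int" where
  "mof x = (if x = -1/2 then 1 else if x = 1/2 then -1 else 0)"

lemma mode_tri:
  assumes b: "\<bar>A\<bar> + \<bar>B\<bar> + \<bar>C\<bar> \<le> 6" "even (A + B + C + 6)"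
    and e: "B = C" "real_of_int A + 2 * x * real_of_int B = 0" and x: "\<bar>x\<bar> < 1"
  shows "A = mof x * B \<and> (x \<noteq> 0 \<and> x \<noteq> 1/2 \<and> x \<noteq> -1/2 \<longrightarrow> B = 0)"
proof (cases "B = 0")
  case True
  then show ?thesis using e by (simp add: mof_def)
next
  case False
  have "\<bar>real_of_int A\<bar> = 2 * \<bar>x\<bar> * \<bar>real_of_int B\<bar>"
    using e(2) by (metis abs_minus_cancel abs_mult abs_numeral add_eq_0_iff mult.assoc)
  also have "\<dots> < 2 * \<bar>real_of_int B\<bar>" using x False by simp
  finally have "\<bar>A\<bar> < 2 * \<bar>B\<bar>" by linarith
  have "even A" using b(2) e(1) by simp
  then obtain k where k: "A = 2*k" by (auto elim: evenE)
  have h1: "\<bar>k\<bar> < \<bar>B\<bar>" using \<open>\<bar>A\<bar> < 2 * \<bar>B\<bar>\<close> k by (simp add: abs_mult)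
  have h2: "\<bar>k\<bar> + \<bar>B\<bar> \<le> 3" using b(1) e(1) k by (simp add: abs_mult)
  have "\<bar>k\<bar> \<le> 1" using h1 h2 by linarith
  then have "k \<in> {-1,0,1}" by (auto simp: abs_le_iff)
  moreover have "\<bar>B\<bar> \<le> 3" using h1 h2 by linarith
  ultimately have "k = 0 \<or> (k = 1 \<and> B = 2) \<or> (k = 1 \<and> B = -2) \<or> (k = -1 \<and> B = 2) \<or> (k = -1 \<and> B = -2)"
    using h1 h2 by (auto simp: abs_le_iff abs_less_iff)
  then have cs: "A = 0 \<or> (A = 2 \<and> B = 2) \<or> (A = 2 \<and> B = -2) \<or> (A = -2 \<and> B = 2) \<or> (A = -2 \<and> B = -2)"
    using k by auto
  then show ?thesis using e(2) False unfolding mof_def by auto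
qed




definition cands :: "int \<Rightarrow> cd list \<Rightarrow> cd list list" where
  "cands m f = gen (\<lambda>r. lexless f r \<and> cond m f r)"

lemma top_cands: "topS m = concat (map (\<lambda>f. srch m 5 [f] (cands m f)) firsts)"
  by (simp add: topS_def cands_def)

lemma cd_in: "x \<in> set [Z,P,N]" by (cases x) auto

lemma conc_mem: "x \<in> set (F y) \<Longrightarrow> y \<in> set ys \<Longrightarrow> x \<in> set (concat (map F ys))"
  by auto

lemma gen_mem:
  assumes "length r = 6" "p r" shows "r \<in> set (gen p)"
proof -
  obtain x1 x2 x3 x4 x5 x6 where r: "r = [x1,x2,x3,x4,x5,x6]"
    using assms(1) by (auto simp: length_Suc_conv numeral_eq_Suc)
  show ?thesis unfolding gen_def r
    apply (rule conc_mem[OF _ cd_in[of x1]])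
    apply (rule conc_mem[OF _ cd_in[of x2]])
    apply (rule conc_mem[OF _ cd_in[of x3]])
    apply (rule conc_mem[OF _ cd_in[of x4]])
    apply (rule conc_mem[OF _ cd_in[of x5]])
    apply (rule conc_mem[OF _ cd_in[of x6]])
    using assms(2) r by simp
qed

lemma filt_set: "set (filt m s cs) = {t \<in> set cs. lexless s t \<and> cond m s t}"
  by (induction cs) auto

lemma srchL_mem: "s \<in> set ss \<Longrightarrow> colok (M@[s]) \<Longrightarrow> R \<in> set (srch m n (M@[s]) (filt m s cs)) \<Longrightarrow>
   R \<in> set (srchL m n M cs ss)"
  by (induction ss) auto

lemma colokL_iff: "colokL js M \<longleftrightarrow> (\<forall>j\<in>set js. \<not> lexless (colk (Suc j) M) (colk j M))"
  by (induction js) auto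

lemma colsokL_iff: "colsokL m ps M \<longleftrightarrow> (\<forall>(j,k)\<in>set ps. cond m (colk j M) (colk k M))"
  by (induction m ps M rule: colsokL.induct) auto

lemma colk_take: "colk j (take k R) = take k (colk j R)"
  by (simp add: colk_def take_map)

lemma colok_take: "colok R \<Longrightarrow> colok (take k R)"
  unfolding colok_def colokL_iff colk_take using lexless_take by blast

lemma srch_sound_aux:
  assumes inc: "\<And>i j. i < j \<Longrightarrow> j < 6 \<Longrightarrow> lexless (R!i) (R!j) \<and> cond m (R!i) (R!j)"
    and cok: "colok R" and csok: "colsok m R" and len: "length R = 6"
  shows "length M + n = 6 \<Longrightarrow> 0 < length M \<Longrightarrow> M = take (length M) R \<Longrightarrow>
     (\<forall>j. length M \<le> j \<longrightarrow> j < 6 \<longrightarrow> R!j \<in> set cs) \<Longrightarrow> R \<in> set (srch m n M cs)"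
proof (induction n arbitrary: M cs)
  case 0
  then have "M = R" using len by simp
  then show ?case using csok by simp
next
  case (Suc n)
  let ?s = "R ! length M"
  have lm: "length M < 6" using Suc.prems(1) by simp
  have s_in: "?s \<in> set cs" using Suc.prems(4) lm by simp
  have ms: "M @ [?s] = take (Suc (length M)) R"
    using Suc.prems(3) lm len by (metis take_Suc_conv_app_nth)
  have cok': "colok (M @ [?s])" using ms colok_take[OF cok] by simp
  have "R \<in> set (srch m n (M @ [?s]) (filt m ?s cs))"
  proof (rule Suc.IH)
    show "length (M @ [?s]) + n = 6" using Suc.prems(1) by simp
    show "0 < length (M @ [?s])" by simp
    show "M @ [?s] = take (length (M @ [?s])) R" using ms by (metis length_append_singleton)
    show "\<forall>j. length (M @ [?s]) \<le> j \<longrightarrow> j < 6 \<longrightarrow> R ! j \<in> set (filt m ?s cs)"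
      using Suc.prems(4) inc by (auto simp: filt_set)
  qed
  then show ?case using srchL_mem[OF s_in cok'] by simp
qed

lemma sorted_first:
  assumes "colok R" "length R = 6" "length (R!0) = 6"
  shows "sorted (map rk (R!0))"
proof -
  have "\<forall>j\<in>set [0,1,2,3,4]. \<not> lexless (colk (Suc j) R) (colk j R)"
    using assms(1) unfolding colok_def colokL_iff by blast
  then have h: "\<And>j. j < 5 \<Longrightarrow> \<not> lexless (colk (Suc j) R) (colk j R)" by (auto simp: numeral_eq_Suc less_Suc_eq)
  have "\<And>j. j < 5 \<Longrightarrow> rk (R!0!j) \<le> rk (R!0!Suc j)"
  proof (rule ccontr)
    fix j assume j: "j < 5" "\<not> rk (R!0!j) \<le> rk (R!0!Suc j)"
    have "lexless (colk (Suc j) R) (colk j R)"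
      apply (rule lexlessI[of 0]) using j assms(2) by (auto simp: colk_def)
    then show False using h j by blast
  qed
  then show ?thesis using assms(3) by (auto simp: sorted_iff_nth_Suc)
qed

lemma srch_sound:
  assumes inc: "\<And>i j. i < j \<Longrightarrow> j < 6 \<Longrightarrow> lexless (R!i) (R!j) \<and> cond m (R!i) (R!j)"
    and cok: "colok R"
    and cols: "\<And>j k. j < k \<Longrightarrow> k < 6 \<Longrightarrow> cond m (colk j R) (colk k R)"
    and len: "length R = 6" and rl: "\<And>i. i < 6 \<Longrightarrow> length (R!i) = 6"
  shows "R \<in> set (topS m)"
proof -
  have csok: "colsok m R" unfolding colsok_def colsokL_iff using cols by auto
  have f: "R!0 \<in> set firsts" unfolding firsts_def
    using gen_mem sorted_first[OF cok len rl[of 0]] rl[of 0] by simp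
  have "R \<in> set (srch m 5 [R!0] (cands m (R!0)))"
  proof (rule srch_sound_aux[OF inc cok csok len])
    show "length [R!0] + 5 = 6" by simp
    show "0 < length [R!0]" by simp
    show "[R!0] = take (length [R!0]) R" using len by (cases R) auto
    show "\<forall>j. length [R!0] \<le> j \<longrightarrow> j < 6 \<longrightarrow> R ! j \<in> set (cands m (R!0))"
      unfolding cands_def using inc rl gen_mem by auto
  qed
  then show ?thesis unfolding top_cands using f by auto
qed




definition wit :: "complex \<Rightarrow> cd list list \<Rightarrow> nat list \<Rightarrow> nat list \<Rightarrow> complex list \<Rightarrow> complex list \<Rightarrow> bool" where
  "wit a M sl ql d1 d2 \<longleftrightarrow> length sl = 6 \<and> distinct sl \<and> list_all (\<lambda>x. x < 6) sl \<and> length ql = 6 \<and> distinct ql \<and> list_all (\<lambda>x. x < 6) ql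
     \<and> length d1 = 6 \<and> length d2 = 6 \<and> list_all (\<lambda>z. norm z = 1) d1 \<and> list_all (\<lambda>z. norm z = 1) d2
     \<and> list_all (\<lambda>k. list_all (\<lambda>l. val a (M!k!l) = d1!k * H1_list!(sl!k)!(ql!l) * d2!l) [0,1,2,3,4,5]) [0,1,2,3,4,5]"

definition sols0 :: "cd list list list" where
  "sols0 = [[[Z,Z,Z,Z,Z,P],[Z,P,P,N,N,N],[P,Z,N,P,N,N],[P,N,Z,N,P,N],[N,P,N,Z,P,N],[N,N,P,P,Z,N]],
    [[Z,Z,Z,Z,Z,N],[Z,P,P,N,N,P],[P,Z,N,P,N,P],[P,N,Z,N,P,P],[N,P,N,Z,P,P],[N,N,P,P,Z,P]],
    [[Z,Z,P,P,P,N],[Z,P,Z,P,N,P],[P,Z,Z,N,P,P],[P,P,N,Z,Z,N],[P,N,P,Z,N,Z],[N,P,P,N,Z,Z]],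
    [[Z,Z,P,P,N,N],[Z,P,Z,N,P,N],[Z,P,N,Z,N,P],[Z,N,P,N,Z,P],[Z,N,N,P,P,Z],[P,N,N,N,N,N]],
    [[Z,Z,P,P,N,N],[Z,P,Z,N,P,N],[Z,P,N,Z,N,P],[Z,N,P,N,Z,P],[Z,N,N,P,P,Z],[N,P,P,P,P,P]],
    [[Z,Z,P,P,N,N],[Z,P,Z,N,P,N],[P,Z,Z,N,N,P],[P,N,N,Z,Z,N],[N,P,N,Z,N,Z],[N,N,P,N,Z,Z]],
    [[Z,Z,P,P,N,N],[Z,N,P,N,Z,P],[P,P,Z,Z,N,P],[P,N,Z,P,P,Z],[N,Z,N,P,Z,P],[N,P,P,Z,P,Z]],
    [[Z,Z,P,N,N,N],[Z,N,N,Z,P,N],[P,N,Z,N,Z,P],[N,Z,N,Z,N,P],[N,P,Z,N,P,Z],[N,N,P,P,Z,Z]],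
    [[Z,P,P,P,P,P],[P,Z,P,P,N,N],[P,P,Z,N,P,N],[P,P,N,Z,N,P],[P,N,P,N,Z,P],[P,N,N,P,P,Z]],
    [[Z,P,P,P,P,N],[P,Z,P,P,N,P],[P,P,Z,N,P,P],[P,P,N,Z,N,N],[P,N,P,N,Z,N],[N,P,P,N,N,Z]],
    [[Z,P,P,P,P,N],[P,Z,P,P,N,P],[P,P,Z,N,N,N],[P,P,N,Z,P,P],[P,N,N,P,Z,N],[N,P,N,P,N,Z]],
    [[Z,P,P,P,P,N],[P,Z,P,N,N,N],[P,P,Z,P,N,P],[P,N,P,Z,P,P],[P,N,N,P,Z,N],[N,N,P,P,N,Z]],
    [[Z,P,P,P,N,N],[P,Z,P,P,P,P],[P,P,Z,N,P,N],[P,P,N,Z,N,P],[N,P,P,N,Z,P],[N,P,N,P,P,Z]],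
    [[Z,P,P,P,N,N],[P,Z,P,N,P,N],[P,P,Z,P,P,P],[P,N,P,Z,N,P],[N,P,P,N,Z,P],[N,N,P,P,P,Z]],
    [[Z,P,P,P,N,N],[P,Z,P,N,P,N],[P,P,Z,N,N,P],[P,N,N,Z,N,N],[N,P,N,N,Z,N],[N,N,P,N,N,Z]],
    [[Z,P,P,P,N,N],[P,Z,N,N,N,N],[P,N,Z,P,P,N],[P,N,P,Z,N,P],[N,N,P,N,Z,N],[N,N,N,P,N,Z]],
    [[Z,P,P,N,N,N],[P,Z,P,P,P,N],[P,P,Z,P,N,P],[N,P,P,Z,P,P],[N,P,N,P,Z,N],[N,N,P,P,N,Z]],
    [[Z,P,P,N,N,N],[P,Z,N,P,N,N],[P,N,Z,N,P,N],[N,P,N,Z,P,N],[N,N,P,P,Z,N],[N,N,N,N,N,Z]],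
    [[Z,P,N,N,N,N],[P,Z,P,P,N,N],[N,P,Z,P,P,N],[N,P,P,Z,N,P],[N,N,P,N,Z,N],[N,N,N,P,N,Z]],
    [[Z,N,N,N,N,N],[N,Z,P,P,N,N],[N,P,Z,N,P,N],[N,P,N,Z,N,P],[N,N,P,N,Z,P],[N,N,N,P,P,Z]]]"

lemma wit_0_0: "wit \<i> [[Z,Z,Z,Z,Z,P],[Z,P,P,N,N,N],[P,Z,N,P,N,N],[P,N,Z,N,P,N],[N,P,N,Z,P,N],[N,N,P,P,Z,N]] [5,0,1,2,3,4] [0,1,2,3,4,5] [1,-\<i>,\<i>,\<i>,-\<i>,-\<i>] [1,-1,-1,1,1,1]"
  by (simp add: wit_def H1_list_def)

lemma wit_0_1: "wit (-\<i>) [[Z,Z,Z,Z,Z,P],[Z,P,P,N,N,N],[P,Z,N,P,N,N],[P,N,Z,N,P,N],[N,P,N,Z,P,N],[N,N,P,P,Z,N]] [2,0,1,4,5,3] [0,1,4,5,3,2] [1,-\<i>,-\<i>,-\<i>,\<i>,\<i>] [1,1,1,-1,-1,-1]"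
  by (simp add: wit_def H1_list_def)

lemma wit_1_0: "wit \<i> [[Z,Z,Z,Z,Z,N],[Z,P,P,N,N,P],[P,Z,N,P,N,P],[P,N,Z,N,P,P],[N,P,N,Z,P,P],[N,N,P,P,Z,P]] [5,0,1,2,3,4] [0,1,2,3,4,5] [1,-\<i>,\<i>,\<i>,-\<i>,-\<i>] [1,-1,-1,1,1,-1]"
  by (simp add: wit_def H1_list_def)

lemma wit_1_1: "wit (-\<i>) [[Z,Z,Z,Z,Z,N],[Z,P,P,N,N,P],[P,Z,N,P,N,P],[P,N,Z,N,P,P],[N,P,N,Z,P,P],[N,N,P,P,Z,P]] [2,0,1,4,5,3] [0,1,4,5,3,2] [1,-\<i>,-\<i>,-\<i>,\<i>,\<i>] [1,1,1,-1,-1,1]"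
  by (simp add: wit_def H1_list_def)

lemma wit_2_0: "wit \<i> [[Z,Z,P,P,P,N],[Z,P,Z,P,N,P],[P,Z,Z,N,P,P],[P,P,N,Z,Z,N],[P,N,P,Z,N,Z],[N,P,P,N,Z,Z]] [2,1,0,3,4,5] [0,1,2,5,4,3] [1,1,1,\<i>,\<i>,-\<i>] [1,1,1,-\<i>,\<i>,\<i>]"
  by (simp add: wit_def H1_list_def)

lemma wit_2_1: "wit (-\<i>) [[Z,Z,P,P,P,N],[Z,P,Z,P,N,P],[P,Z,Z,N,P,P],[P,P,N,Z,Z,N],[P,N,P,Z,N,Z],[N,P,P,N,Z,Z]] [4,1,0,5,3,2] [0,1,4,2,3,5] [1,1,-1,-\<i>,-\<i>,\<i>] [1,-1,-1,-\<i>,\<i>,\<i>]"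
  by (simp add: wit_def H1_list_def)

lemma wit_3_0: "wit \<i> [[Z,Z,P,P,N,N],[Z,P,Z,N,P,N],[Z,P,N,Z,N,P],[Z,N,P,N,Z,P],[Z,N,N,P,P,Z],[P,N,N,N,N,N]] [1,4,5,3,2,0] [0,1,4,5,3,2] [1,1,1,1,1,1] [1,-\<i>,-\<i>,-\<i>,-\<i>,-\<i>]"
  by (simp add: wit_def H1_list_def)

lemma wit_3_1: "wit (-\<i>) [[Z,Z,P,P,N,N],[Z,P,Z,N,P,N],[Z,P,N,Z,N,P],[Z,N,P,N,Z,P],[Z,N,N,P,P,Z],[P,N,N,N,N,N]] [1,2,3,4,5,0] [0,1,2,3,4,5] [1,1,1,1,1,-1] [1,-\<i>,-\<i>,-\<i>,-\<i>,-\<i>]"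
  by (simp add: wit_def H1_list_def)

lemma wit_4_0: "wit \<i> [[Z,Z,P,P,N,N],[Z,P,Z,N,P,N],[Z,P,N,Z,N,P],[Z,N,P,N,Z,P],[Z,N,N,P,P,Z],[N,P,P,P,P,P]] [1,4,5,3,2,0] [0,1,4,5,3,2] [1,1,1,1,1,-1] [1,-\<i>,-\<i>,-\<i>,-\<i>,-\<i>]"
  by (simp add: wit_def H1_list_def)

lemma wit_4_1: "wit (-\<i>) [[Z,Z,P,P,N,N],[Z,P,Z,N,P,N],[Z,P,N,Z,N,P],[Z,N,P,N,Z,P],[Z,N,N,P,P,Z],[N,P,P,P,P,P]] [1,2,3,4,5,0] [0,1,2,3,4,5] [1,1,1,1,1,1] [1,-\<i>,-\<i>,-\<i>,-\<i>,-\<i>]"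
  by (simp add: wit_def H1_list_def)

lemma wit_5_0: "wit \<i> [[Z,Z,P,P,N,N],[Z,P,Z,N,P,N],[P,Z,Z,N,N,P],[P,N,N,Z,Z,N],[N,P,N,Z,N,Z],[N,N,P,N,Z,Z]] [2,1,0,5,4,3] [0,1,2,3,4,5] [1,1,1,\<i>,-\<i>,-\<i>] [1,1,1,-\<i>,-\<i>,\<i>]"
  by (simp add: wit_def H1_list_def)

lemma wit_5_1: "wit (-\<i>) [[Z,Z,P,P,N,N],[Z,P,Z,N,P,N],[P,Z,Z,N,N,P],[P,N,N,Z,Z,N],[N,P,N,Z,N,Z],[N,N,P,N,Z,Z]] [4,1,0,2,3,5] [0,1,4,5,3,2] [1,1,-1,-\<i>,\<i>,\<i>] [1,-1,-1,-\<i>,-\<i>,\<i>]"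
  by (simp add: wit_def H1_list_def)

lemma wit_6_0: "wit \<i> [[Z,Z,P,P,N,N],[Z,N,P,N,Z,P],[P,P,Z,Z,N,P],[P,N,Z,P,P,Z],[N,Z,N,P,Z,P],[N,P,P,Z,P,Z]] [4,1,5,3,0,2] [0,1,2,3,4,5] [1,1,\<i>,\<i>,-1,-\<i>] [1,-1,\<i>,-\<i>,-1,-\<i>]"
  by (simp add: wit_def H1_list_def)

lemma wit_6_1: "wit (-\<i>) [[Z,Z,P,P,N,N],[Z,N,P,N,Z,P],[P,P,Z,Z,N,P],[P,N,Z,P,P,Z],[N,Z,N,P,Z,P],[N,P,P,Z,P,Z]] [3,1,2,5,0,4] [0,1,4,5,3,2] [1,1,-\<i>,-\<i>,1,\<i>] [1,1,\<i>,-\<i>,1,-\<i>]"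
  by (simp add: wit_def H1_list_def)

lemma wit_7_0: "wit \<i> [[Z,Z,P,N,N,N],[Z,N,N,Z,P,N],[P,N,Z,N,Z,P],[N,Z,N,Z,N,P],[N,P,Z,N,P,Z],[N,N,P,P,Z,Z]] [5,1,3,0,2,4] [0,1,4,5,2,3] [1,1,\<i>,-1,-\<i>,-\<i>] [1,-1,\<i>,-1,\<i>,-\<i>]"
  by (simp add: wit_def H1_list_def)

lemma wit_7_1: "wit (-\<i>) [[Z,Z,P,N,N,N],[Z,N,N,Z,P,N],[P,N,Z,N,Z,P],[N,Z,N,Z,N,P],[N,P,Z,N,P,Z],[N,N,P,P,Z,Z]] [3,1,4,0,5,2] [0,1,2,3,5,4] [1,1,-\<i>,1,\<i>,\<i>] [1,1,\<i>,1,\<i>,-\<i>]"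
  by (simp add: wit_def H1_list_def)

lemma wit_8_0: "wit \<i> [[Z,P,P,P,P,P],[P,Z,P,P,N,N],[P,P,Z,N,P,N],[P,P,N,Z,N,P],[P,N,P,N,Z,P],[P,N,N,P,P,Z]] [0,1,4,5,3,2] [0,1,4,5,3,2] [1,-1,-1,-1,-1,-1] [-\<i>,\<i>,\<i>,\<i>,\<i>,\<i>]"
  by (simp add: wit_def H1_list_def)

lemma wit_8_1: "wit (-\<i>) [[Z,P,P,P,P,P],[P,Z,P,P,N,N],[P,P,Z,N,P,N],[P,P,N,Z,N,P],[P,N,P,N,Z,P],[P,N,N,P,P,Z]] [0,1,2,3,4,5] [0,1,2,3,4,5] [1,1,1,1,1,1] [-\<i>,-\<i>,-\<i>,-\<i>,-\<i>,-\<i>]"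
  by (simp add: wit_def H1_list_def)

lemma wit_9_0: "wit \<i> [[Z,P,P,P,P,N],[P,Z,P,P,N,P],[P,P,Z,N,P,P],[P,P,N,Z,N,N],[P,N,P,N,Z,N],[N,P,P,N,N,Z]] [0,1,4,5,3,2] [0,1,4,5,3,2] [1,-1,-1,-1,-1,1] [-\<i>,\<i>,\<i>,\<i>,\<i>,-\<i>]"
  by (simp add: wit_def H1_list_def)

lemma wit_9_1: "wit (-\<i>) [[Z,P,P,P,P,N],[P,Z,P,P,N,P],[P,P,Z,N,P,P],[P,P,N,Z,N,N],[P,N,P,N,Z,N],[N,P,P,N,N,Z]] [0,1,2,3,4,5] [0,1,2,3,4,5] [1,1,1,1,1,-1] [-\<i>,-\<i>,-\<i>,-\<i>,-\<i>,\<i>]"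
  by (simp add: wit_def H1_list_def)

lemma wit_10_0: "wit \<i> [[Z,P,P,P,P,N],[P,Z,P,P,N,P],[P,P,Z,N,N,N],[P,P,N,Z,P,P],[P,N,N,P,Z,N],[N,P,N,P,N,Z]] [0,1,4,5,2,3] [0,1,4,5,2,3] [1,-1,-1,-1,-1,1] [-\<i>,\<i>,\<i>,\<i>,\<i>,-\<i>]"
  by (simp add: wit_def H1_list_def)

lemma wit_10_1: "wit (-\<i>) [[Z,P,P,P,P,N],[P,Z,P,P,N,P],[P,P,Z,N,N,N],[P,P,N,Z,P,P],[P,N,N,P,Z,N],[N,P,N,P,N,Z]] [0,1,2,3,5,4] [0,1,2,3,5,4] [1,1,1,1,1,-1] [-\<i>,-\<i>,-\<i>,-\<i>,-\<i>,\<i>]"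
  by (simp add: wit_def H1_list_def)

lemma wit_11_0: "wit \<i> [[Z,P,P,P,P,N],[P,Z,P,N,N,N],[P,P,Z,P,N,P],[P,N,P,Z,P,P],[P,N,N,P,Z,N],[N,N,P,P,N,Z]] [0,1,4,3,2,5] [0,1,4,3,2,5] [1,-1,-1,-1,-1,1] [-\<i>,\<i>,\<i>,\<i>,\<i>,-\<i>]"
  by (simp add: wit_def H1_list_def)

lemma wit_11_1: "wit (-\<i>) [[Z,P,P,P,P,N],[P,Z,P,N,N,N],[P,P,Z,P,N,P],[P,N,P,Z,P,P],[P,N,N,P,Z,N],[N,N,P,P,N,Z]] [0,1,2,4,5,3] [0,1,2,4,5,3] [1,1,1,1,1,-1] [-\<i>,-\<i>,-\<i>,-\<i>,-\<i>,\<i>]"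
  by (simp add: wit_def H1_list_def)

lemma wit_12_0: "wit \<i> [[Z,P,P,P,N,N],[P,Z,P,P,P,P],[P,P,Z,N,P,N],[P,P,N,Z,N,P],[N,P,P,N,Z,P],[N,P,N,P,P,Z]] [0,1,4,5,2,3] [0,1,4,5,2,3] [1,-1,-1,-1,1,1] [-\<i>,\<i>,\<i>,\<i>,-\<i>,-\<i>]"
  by (simp add: wit_def H1_list_def)

lemma wit_12_1: "wit (-\<i>) [[Z,P,P,P,N,N],[P,Z,P,P,P,P],[P,P,Z,N,P,N],[P,P,N,Z,N,P],[N,P,P,N,Z,P],[N,P,N,P,P,Z]] [0,1,2,3,5,4] [0,1,2,3,5,4] [1,1,1,1,-1,-1] [-\<i>,-\<i>,-\<i>,-\<i>,\<i>,\<i>]"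
  by (simp add: wit_def H1_list_def)

lemma wit_13_0: "wit \<i> [[Z,P,P,P,N,N],[P,Z,P,N,P,N],[P,P,Z,P,P,P],[P,N,P,Z,N,P],[N,P,P,N,Z,P],[N,N,P,P,P,Z]] [0,1,4,3,2,5] [0,1,4,3,2,5] [1,-1,-1,-1,1,1] [-\<i>,\<i>,\<i>,\<i>,-\<i>,-\<i>]"
  by (simp add: wit_def H1_list_def)

lemma wit_13_1: "wit (-\<i>) [[Z,P,P,P,N,N],[P,Z,P,N,P,N],[P,P,Z,P,P,P],[P,N,P,Z,N,P],[N,P,P,N,Z,P],[N,N,P,P,P,Z]] [0,1,2,4,5,3] [0,1,2,4,5,3] [1,1,1,1,-1,-1] [-\<i>,-\<i>,-\<i>,-\<i>,\<i>,\<i>]"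
  by (simp add: wit_def H1_list_def)

lemma wit_14_0: "wit \<i> [[Z,P,P,P,N,N],[P,Z,P,N,P,N],[P,P,Z,N,N,P],[P,N,N,Z,N,N],[N,P,N,N,Z,N],[N,N,P,N,N,Z]] [0,1,4,2,3,5] [0,1,4,2,3,5] [1,-1,-1,-1,1,1] [-\<i>,\<i>,\<i>,\<i>,-\<i>,-\<i>]"
  by (simp add: wit_def H1_list_def)

lemma wit_14_1: "wit (-\<i>) [[Z,P,P,P,N,N],[P,Z,P,N,P,N],[P,P,Z,N,N,P],[P,N,N,Z,N,N],[N,P,N,N,Z,N],[N,N,P,N,N,Z]] [0,1,2,5,4,3] [0,1,2,5,4,3] [1,1,1,1,-1,-1] [-\<i>,-\<i>,-\<i>,-\<i>,\<i>,\<i>]"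
  by (simp add: wit_def H1_list_def)

lemma wit_15_0: "wit \<i> [[Z,P,P,P,N,N],[P,Z,N,N,N,N],[P,N,Z,P,P,N],[P,N,P,Z,N,P],[N,N,P,N,Z,N],[N,N,N,P,N,Z]] [0,1,2,3,4,5] [0,1,2,3,4,5] [1,-1,-1,-1,1,1] [-\<i>,\<i>,\<i>,\<i>,-\<i>,-\<i>]"
  by (simp add: wit_def H1_list_def)

lemma wit_15_1: "wit (-\<i>) [[Z,P,P,P,N,N],[P,Z,N,N,N,N],[P,N,Z,P,P,N],[P,N,P,Z,N,P],[N,N,P,N,Z,N],[N,N,N,P,N,Z]] [0,1,4,5,3,2] [0,1,4,5,3,2] [1,1,1,1,-1,-1] [-\<i>,-\<i>,-\<i>,-\<i>,\<i>,\<i>]"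
  by (simp add: wit_def H1_list_def)

lemma wit_16_0: "wit \<i> [[Z,P,P,N,N,N],[P,Z,P,P,P,N],[P,P,Z,P,N,P],[N,P,P,Z,P,P],[N,P,N,P,Z,N],[N,N,P,P,N,Z]] [0,1,4,2,3,5] [0,1,4,2,3,5] [1,-1,-1,1,1,1] [-\<i>,\<i>,\<i>,-\<i>,-\<i>,-\<i>]"
  by (simp add: wit_def H1_list_def)

lemma wit_16_1: "wit (-\<i>) [[Z,P,P,N,N,N],[P,Z,P,P,P,N],[P,P,Z,P,N,P],[N,P,P,Z,P,P],[N,P,N,P,Z,N],[N,N,P,P,N,Z]] [0,1,2,5,4,3] [0,1,2,5,4,3] [1,1,1,-1,-1,-1] [-\<i>,-\<i>,-\<i>,\<i>,\<i>,\<i>]"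
  by (simp add: wit_def H1_list_def)

lemma wit_17_0: "wit \<i> [[Z,P,P,N,N,N],[P,Z,N,P,N,N],[P,N,Z,N,P,N],[N,P,N,Z,P,N],[N,N,P,P,Z,N],[N,N,N,N,N,Z]] [0,1,2,3,4,5] [0,1,2,3,4,5] [1,-1,-1,1,1,1] [-\<i>,\<i>,\<i>,-\<i>,-\<i>,-\<i>]"
  by (simp add: wit_def H1_list_def)

lemma wit_17_1: "wit (-\<i>) [[Z,P,P,N,N,N],[P,Z,N,P,N,N],[P,N,Z,N,P,N],[N,P,N,Z,P,N],[N,N,P,P,Z,N],[N,N,N,N,N,Z]] [0,1,4,5,3,2] [0,1,4,5,3,2] [1,1,1,-1,-1,-1] [-\<i>,-\<i>,-\<i>,\<i>,\<i>,\<i>]"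
  by (simp add: wit_def H1_list_def)

lemma wit_18_0: "wit \<i> [[Z,P,N,N,N,N],[P,Z,P,P,N,N],[N,P,Z,P,P,N],[N,P,P,Z,N,P],[N,N,P,N,Z,N],[N,N,N,P,N,Z]] [0,1,2,3,5,4] [0,1,2,3,5,4] [1,-1,1,1,1,1] [-\<i>,\<i>,-\<i>,-\<i>,-\<i>,-\<i>]"
  by (simp add: wit_def H1_list_def)

lemma wit_18_1: "wit (-\<i>) [[Z,P,N,N,N,N],[P,Z,P,P,N,N],[N,P,Z,P,P,N],[N,P,P,Z,N,P],[N,N,P,N,Z,N],[N,N,N,P,N,Z]] [0,1,4,5,2,3] [0,1,4,5,2,3] [1,1,-1,-1,-1,-1] [-\<i>,-\<i>,\<i>,\<i>,\<i>,\<i>]"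
  by (simp add: wit_def H1_list_def)

lemma wit_19_0: "wit \<i> [[Z,N,N,N,N,N],[N,Z,P,P,N,N],[N,P,Z,N,P,N],[N,P,N,Z,N,P],[N,N,P,N,Z,P],[N,N,N,P,P,Z]] [0,1,4,5,3,2] [0,1,4,5,3,2] [1,1,1,1,1,1] [-\<i>,-\<i>,-\<i>,-\<i>,-\<i>,-\<i>]"
  by (simp add: wit_def H1_list_def)

lemma wit_19_1: "wit (-\<i>) [[Z,N,N,N,N,N],[N,Z,P,P,N,N],[N,P,Z,N,P,N],[N,P,N,Z,N,P],[N,N,P,N,Z,P],[N,N,N,P,P,Z]] [0,1,2,3,4,5] [0,1,2,3,4,5] [1,-1,-1,-1,-1,-1] [-\<i>,\<i>,\<i>,\<i>,\<i>,\<i>]"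
  by (simp add: wit_def H1_list_def)




lemma equiv_from:
  fixes H :: "complex^6^6" and s p al be :: "6 \<Rightarrow> 6" and d1 d2 :: "6 \<Rightarrow> complex"
  assumes bs: "bij s" and bp: "bij p" and ba: "bij al" and bb: "bij be"
    and n1: "\<And>u. norm (d1 u) = 1" and n2: "\<And>v. norm (d2 v) = 1"
    and h: "\<And>u v. H $ (s u) $ (p v) = d1 u * H1 $ (al u) $ (be v) * d2 v"
  shows "complex_equivalent H H1"
proof -
  define si where "si = inv s"
  define pi where "pi = inv p"
  define PP :: "complex^6^6" where "PP = (\<chi> x w. if w = al (si x) then d1 (si x) else 0)"
  define QQ :: "complex^6^6" where "QQ = (\<chi> w y. if w = be (pi y) then d2 (pi y) else 0)"
  have s_si: "s (si x) = x" for x unfolding si_def using bs by (simp add: bij_is_surj surj_f_inv_f)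
  have p_pi: "p (pi x) = x" for x unfolding pi_def using bp by (simp add: bij_is_surj surj_f_inv_f)
  have bsi: "bij si" unfolding si_def using bs by (simp add: bij_imp_bij_inv)
  have bpi: "bij pi" unfolding pi_def using bp by (simp add: bij_imp_bij_inv)
  have d1nz: "d1 u \<noteq> 0" for u using n1[of u] by auto
  have d2nz: "d2 u \<noteq> 0" for u using n2[of u] by auto
  have ph: "(PP ** H1) $ x $ w' = d1 (si x) * H1 $ (al (si x)) $ w'" for x w'
  proof -
    have "(PP ** H1) $ x $ w' = (\<Sum>w\<in>UNIV. PP$x$w * H1$w$w')" by (simp add: matrix_matrix_mult_def)
    also have "\<dots> = (\<Sum>w\<in>UNIV. if w = al (si x) then d1 (si x) * H1$w$w' else 0)"
      by (rule sum.cong) (auto simp: PP_def)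
    also have "\<dots> = d1 (si x) * H1 $ (al (si x)) $ w'" by (simp add: sum.delta')
    finally show ?thesis .
  qed
  have prod: "(PP ** H1 ** QQ) $ x $ y = H $ x $ y" for x y
  proof -
    have "(PP ** H1 ** QQ) $ x $ y = (\<Sum>w\<in>UNIV. (PP ** H1)$x$w * QQ$w$y)" by (simp add: matrix_matrix_mult_def)
    also have "\<dots> = (\<Sum>w\<in>UNIV. if w = be (pi y) then d1 (si x) * H1 $ (al (si x)) $ w * d2 (pi y) else 0)"
      by (rule sum.cong) (auto simp: ph QQ_def)
    also have "\<dots> = d1 (si x) * H1 $ (al (si x)) $ (be (pi y)) * d2 (pi y)" by (simp add: sum.delta')
    also have "\<dots> = H $ (s (si x)) $ (p (pi y))" using h by simp
    finally show ?thesis by (simp add: s_si p_pi)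
  qed
  have mP: "monomial_unitary PP"
    unfolding monomial_unitary_def
  proof (intro conjI allI impI)
    fix x show "\<exists>!w. PP $ x $ w \<noteq> 0" by (auto simp: PP_def d1nz)
  next
    fix w
    have iai: "inj al" "inj si" using ba bsi bij_is_inj by auto
    obtain x where xw: "al (si x) = w"
      using ba bsi by (metis bij_pointE)
    have un: "\<And>x'. al (si x') = w \<Longrightarrow> x' = x"
      using iai xw by (metis injD)
    have u: "\<And>x'. PP $ x' $ w \<noteq> 0 \<longleftrightarrow> al (si x') = w" by (auto simp: PP_def d1nz)
    show "\<exists>!x. PP $ x $ w \<noteq> 0" using u un xw by blast
  next
    fix x w assume "PP $ x $ w \<noteq> 0" then show "norm (PP $ x $ w) = 1" by (auto simp: PP_def n1 split: if_splits)
  qed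
  have mQ: "monomial_unitary QQ"
    unfolding monomial_unitary_def
  proof (intro conjI allI impI)
    fix w
    have iai: "inj be" "inj pi" using bb bpi bij_is_inj by auto
    obtain y where yw: "be (pi y) = w"
      using bb bpi by (metis bij_pointE)
    have un: "\<And>y'. be (pi y') = w \<Longrightarrow> y' = y"
      using iai yw by (metis injD)
    have u: "\<And>y'. QQ $ w $ y' \<noteq> 0 \<longleftrightarrow> be (pi y') = w" by (auto simp: QQ_def d2nz)
    show "\<exists>!y. QQ $ w $ y \<noteq> 0" using u un yw by blast
  next
    fix y show "\<exists>!w. QQ $ w $ y \<noteq> 0" by (auto simp: QQ_def d2nz)
  next
    fix w y assume "QQ $ w $ y \<noteq> 0" then show "norm (QQ $ w $ y) = 1" by (auto simp: QQ_def n2 split: if_splits)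
  qed
  have "H = PP ** H1 ** QQ" using prod by (simp add: vec_eq_iff)
  then show ?thesis unfolding complex_equivalent_def using mP mQ by blast
qed

lemma H1_e6: "i < 6 \<Longrightarrow> j < 6 \<Longrightarrow> H1 $ (e6!i) $ (e6!j) = H1_list ! i ! j"
  by (simp add: H1_def pos_e6[unfolded pos_def])

lemma upt6: "[0..<6] = [0,1,2,3,4,5::nat]" by (simp add: upt_rec numeral_eq_Suc)

lemma perm_list_bij:
  assumes "distinct sl" "length sl = 6" "list_all (\<lambda>x. x < 6) sl"
  shows "bij (\<lambda>u::6. e6 ! (sl ! pos u))" and "\<And>u. sl ! pos u < 6"
proof -
  show lt: "\<And>u. sl ! pos u < 6" using assms(2,3) pos_lt by (simp add: list_all_length)
  have "inj (\<lambda>u::6. e6 ! (sl ! pos u))"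
  proof (rule injI)
    fix u v assume "e6 ! (sl ! pos u) = e6 ! (sl ! pos v)"
    then have "sl ! pos u = sl ! pos v" using e6_inj lt by blast
    then have "pos u = pos v" using assms(1,2) pos_lt by (simp add: nth_eq_iff_index_eq)
    then show "u = v" using e6_pos by metis
  qed
  then show "bij (\<lambda>u::6. e6 ! (sl ! pos u))" by (simp add: bij_def finite_UNIV_inj_surj)
qed

lemma wit_equiv:
  fixes H :: "complex^6^6"
  assumes w: "wit a M sl ql d1 d2" and bs: "bij s" and bp: "bij p"
    and hm: "\<And>k l. k < 6 \<Longrightarrow> l < 6 \<Longrightarrow> H $ s (e6!k) $ p (e6!l) = val a (M!k!l)"
  shows "complex_equivalent H H1"
proof (rule equiv_from[OF bs bp])
  have ds: "distinct sl" "length sl = 6" "list_all (\<lambda>x. x < 6) sl" "distinct ql" "length ql = 6" "list_all (\<lambda>x. x < 6) ql"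
    using w by (auto simp: wit_def)
  show "bij (\<lambda>u. e6 ! (sl ! pos u))" "bij (\<lambda>u. e6 ! (ql ! pos u))" using perm_list_bij ds by auto
  have l: "length d1 = 6" "length d2 = 6" using w by (auto simp: wit_def)
  show "norm (d1 ! pos u) = 1" for u using w l pos_lt[of u] by (auto simp: wit_def list_all_iff)
  show "norm (d2 ! pos u) = 1" for u using w l pos_lt[of u] by (auto simp: wit_def list_all_iff)
  fix u v
  have lt: "sl ! pos u < 6" "ql ! pos v < 6" using perm_list_bij ds by auto
  have ll: "list_all (\<lambda>k. list_all (\<lambda>l. val a (M!k!l) = d1!k * H1_list!(sl!k)!(ql!l) * d2!l) [0..<6]) [0..<6]"
    using w by (simp add: wit_def upt6)
  have eq: "val a (M!pos u!pos v) = d1!pos u * H1_list!(sl!pos u)!(ql!pos v) * d2!pos v"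
    using ll pos_lt[of u] pos_lt[of v] by (auto simp: list_all_iff)
  have "H $ s u $ p v = H $ s (e6 ! pos u) $ p (e6 ! pos v)" by (simp add: e6_pos)
  also have "\<dots> = val a (M!pos u!pos v)" using hm pos_lt by blast
  finally show "H $ s u $ p v = d1 ! pos u * H1 $ (e6 ! (sl ! pos u)) $ (e6 ! (ql ! pos v)) * d2 ! pos v"
    using eq H1_e6[OF lt] by simp
qed

lemma sum4: "\<forall>v\<in>set vs. v \<in> {0, 4::complex} \<Longrightarrow> \<exists>n::nat. sum_list vs = 4 * of_nat n"
proof (induction vs)
  case Nil then show ?case by (intro exI[of _ "0::nat"]) simp
next
  case (Cons v vs)
  then obtain n where n: "sum_list vs = 4 * of_nat n" by auto
  show ?case
  proof (cases "v = 0")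
    case True then show ?thesis using n by auto
  next
    case False then have "v = 4" using Cons.prems by auto
    then show ?thesis using n by (intro exI[of _ "Suc n"]) (simp add: algebra_simps)
  qed
qed

lemma real_case:
  fixes H :: "complex^6^6"
  assumes hh: "complex_hadamard H" and e: "\<forall>i j. H$i$j \<in> {1,-1}"
  shows False
proof -
  have pm: "H$i$j = 1 \<or> H$i$j = -1" for i j using e by blast
  have cj: "cnj (H$i$j) = H$i$j" for i j using pm[of i j] by auto
  have sq: "H$i$j * H$i$j = 1" for i j using pm[of i j] by auto
  let ?x = "\<lambda>j. H$0$j" and ?y = "\<lambda>j. H$1$j" and ?z = "\<lambda>j. H$2$j"
  have o1: "(\<Sum>j\<in>UNIV. ?x j * ?y j) = 0" using had_rows[OF hh, of 0 1] cj by simp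
  have o2: "(\<Sum>j\<in>UNIV. ?x j * ?z j) = 0" using had_rows[OF hh, of 0 2] cj by simp
  have o3: "(\<Sum>j\<in>UNIV. ?y j * ?z j) = 0" using had_rows[OF hh, of 1 2] cj by simp
  let ?t = "\<lambda>j. (1 + ?x j * ?y j) * (1 + ?x j * ?z j)"
  have t: "?t j = 1 + ?x j * ?y j + ?x j * ?z j + ?y j * ?z j" for j
    using sq[of 0 j] by (simp add: algebra_simps)
  have "(\<Sum>j\<in>UNIV. ?t j) = (\<Sum>j\<in>(UNIV::6 set). 1) + (\<Sum>j\<in>UNIV. ?x j * ?y j) + (\<Sum>j\<in>UNIV. ?x j * ?z j) + (\<Sum>j\<in>UNIV. ?y j * ?z j)"
    unfolding t by (simp add: sum.distrib)
  also have "\<dots> = 6" using o1 o2 o3 by simp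
  finally have s6: "sum_list (map ?t e6) = 6" by (simp add: sum_e6)
  have "\<forall>v\<in>set (map ?t e6). v \<in> {0,4}"
  proof
    fix v assume "v \<in> set (map ?t e6)"
    then obtain j where v: "v = ?t j" by auto
    have "?x j \<in> {1,-1}" "?y j \<in> {1,-1}" "?z j \<in> {1,-1}" using e by auto
    then show "v \<in> {0,4}" unfolding v by auto
  qed
  then obtain n where "sum_list (map ?t e6) = 4 * of_nat n" using sum4 by blast
  then have "(6::complex) = of_nat (4 * n)" using s6 by simp
  then have "6 = 4 * n" by (metis of_nat_eq_iff of_nat_numeral)
  then show False by presburger
qed

lemma pair_cond:
  assumes s0: "sum_list (map2 (\<lambda>x y. val a x * cnj (val a y)) r1 r2) = 0"
    and l: "length r1 = 6" "length r2 = 6" and aa: "a * cnj a = 1" and im: "Im a \<noteq> 0"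
    and re: "\<bar>Re a\<bar> < 1"
  shows "cond (mof (Re a)) r1 r2 \<and> (Re a \<noteq> 0 \<and> Re a \<noteq> 1/2 \<and> Re a \<noteq> -1/2 \<longrightarrow> fst (snd (st r1 r2)) = 0)"
proof -
  obtain A B C where abc: "st r1 r2 = (A,B,C)" by (cases "st r1 r2") auto
  have "of_int A + a * of_int B + cnj a * of_int C = (0::complex)"
    using st_sum[of r1 r2 a] l aa s0 abc by simp
  then have e: "B = C" "real_of_int A + 2 * Re a * real_of_int B = 0" using pair_eq im by blast+
  have b: "\<bar>A\<bar> + \<bar>B\<bar> + \<bar>C\<bar> \<le> 6" "even (A + B + C + 6)" using st_bounds[OF _ abc] l by auto
  have "A = mof (Re a) * B \<and> (Re a \<noteq> 0 \<and> Re a \<noteq> 1/2 \<and> Re a \<noteq> -1/2 \<longrightarrow> B = 0)"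
    by (rule mode_tri[OF b e re])
  then show ?thesis using abc e by (simp add: cond_def)
qed

lemma sols0_B_list: "list_all (\<lambda>M. list_ex (\<lambda>k. list_ex (\<lambda>l. k \<noteq> l \<and> fst (snd (st (M!k) (M!l))) \<noteq> 0) [0,1,2,3,4,5]) [0,1,2,3,4,5]) sols0"
  unfolding sols0_def by simp

lemma sols0_B: "M \<in> set sols0 \<Longrightarrow> \<exists>k<6. \<exists>l<6. k \<noteq> l \<and> fst (snd (st (M!k) (M!l))) \<noteq> 0"
proof -
  assume "M \<in> set sols0"
  then obtain k l where kl: "k \<in> set [0,1,2,3,4,5::nat]" "l \<in> set [0,1,2,3,4,5::nat]" "k \<noteq> l \<and> fst (snd (st (M!k) (M!l))) \<noteq> 0"
    using sols0_B_list unfolding list_all_iff list_ex_iff by blast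
  have "k < 6" "l < 6" using kl(1,2) by auto
  then show ?thesis using kl(3) by blast
qed




lemma firsts_val: "firsts = [[Z,Z,Z,Z,Z,Z],[Z,Z,Z,Z,Z,P],[Z,Z,Z,Z,Z,N],[Z,Z,Z,Z,P,P],[Z,Z,Z,Z,P,N],[Z,Z,Z,Z,N,N],[Z,Z,Z,P,P,P],[Z,Z,Z,P,P,N],[Z,Z,Z,P,N,N],[Z,Z,Z,N,N,N],[Z,Z,P,P,P,P],[Z,Z,P,P,P,N],[Z,Z,P,P,N,N],[Z,Z,P,N,N,N],[Z,Z,N,N,N,N],[Z,P,P,P,P,P],[Z,P,P,P,P,N],[Z,P,P,P,N,N],[Z,P,P,N,N,N],[Z,P,N,N,N,N],[Z,N,N,N,N,N],[P,P,P,P,P,P],[P,P,P,P,P,N],[P,P,P,P,N,N],[P,P,P,N,N,N],[P,P,N,N,N,N],[P,N,N,N,N,N],[N,N,N,N,N,N]]"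
  by (simp add: firsts_def gen_def)

lemma srch_z_1: "srch 0 5 [[Z,Z,Z,Z,Z,Z]] (cands 0 [Z,Z,Z,Z,Z,Z]) = []"
  by (simp add: cands_def cond_def colok_def colsok_def colk_def gen_def numeral_eq_Suc)

lemma srch_z_2: "srch 0 5 [[Z,Z,Z,Z,Z,P]] (cands 0 [Z,Z,Z,Z,Z,P]) = [[[Z,Z,Z,Z,Z,P],[Z,P,P,N,N,N],[P,Z,N,P,N,N],[P,N,Z,N,P,N],[N,P,N,Z,P,N],[N,N,P,P,Z,N]]]"
  by (simp add: cands_def cond_def colok_def colsok_def colk_def gen_def numeral_eq_Suc)

lemma srch_z_3: "srch 0 5 [[Z,Z,Z,Z,Z,N]] (cands 0 [Z,Z,Z,Z,Z,N]) = [[[Z,Z,Z,Z,Z,N],[Z,P,P,N,N,P],[P,Z,N,P,N,P],[P,N,Z,N,P,P],[N,P,N,Z,P,P],[N,N,P,P,Z,P]]]"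
  by (simp add: cands_def cond_def colok_def colsok_def colk_def gen_def numeral_eq_Suc)

lemma srch_z_4: "srch 0 5 [[Z,Z,Z,Z,P,P]] (cands 0 [Z,Z,Z,Z,P,P]) = []"
  by (simp add: cands_def cond_def colok_def colsok_def colk_def gen_def numeral_eq_Suc)

lemma srch_z_5: "srch 0 5 [[Z,Z,Z,Z,P,N]] (cands 0 [Z,Z,Z,Z,P,N]) = []"
  by (simp add: cands_def cond_def colok_def colsok_def colk_def gen_def numeral_eq_Suc)

lemma srch_z_6: "srch 0 5 [[Z,Z,Z,Z,N,N]] (cands 0 [Z,Z,Z,Z,N,N]) = []"
  by (simp add: cands_def cond_def colok_def colsok_def colk_def gen_def numeral_eq_Suc)

lemma srch_z_7: "srch 0 5 [[Z,Z,Z,P,P,P]] (cands 0 [Z,Z,Z,P,P,P]) = []"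
  by (simp add: cands_def cond_def colok_def colsok_def colk_def gen_def numeral_eq_Suc)

lemma srch_z_8: "srch 0 5 [[Z,Z,Z,P,P,N]] (cands 0 [Z,Z,Z,P,P,N]) = []"
  by (simp add: cands_def cond_def colok_def colsok_def colk_def gen_def numeral_eq_Suc)

lemma srch_z_9: "srch 0 5 [[Z,Z,Z,P,N,N]] (cands 0 [Z,Z,Z,P,N,N]) = []"
  by (simp add: cands_def cond_def colok_def colsok_def colk_def gen_def numeral_eq_Suc)

lemma srch_z_10: "srch 0 5 [[Z,Z,Z,N,N,N]] (cands 0 [Z,Z,Z,N,N,N]) = []"
  by (simp add: cands_def cond_def colok_def colsok_def colk_def gen_def numeral_eq_Suc)

lemma srch_z_11: "srch 0 5 [[Z,Z,P,P,P,P]] (cands 0 [Z,Z,P,P,P,P]) = []"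
  by (simp add: cands_def cond_def colok_def colsok_def colk_def gen_def numeral_eq_Suc)

lemma srch_z_12: "srch 0 5 [[Z,Z,P,P,P,N]] (cands 0 [Z,Z,P,P,P,N]) = [[[Z,Z,P,P,P,N],[Z,P,Z,P,N,P],[P,Z,Z,N,P,P],[P,P,N,Z,Z,N],[P,N,P,Z,N,Z],[N,P,P,N,Z,Z]]]"
  by (simp add: cands_def cond_def colok_def colsok_def colk_def gen_def numeral_eq_Suc)

lemma srch_z_13: "srch 0 5 [[Z,Z,P,P,N,N]] (cands 0 [Z,Z,P,P,N,N]) = [[[Z,Z,P,P,N,N],[Z,P,Z,N,P,N],[Z,P,N,Z,N,P],[Z,N,P,N,Z,P],[Z,N,N,P,P,Z],[P,N,N,N,N,N]],[[Z,Z,P,P,N,N],[Z,P,Z,N,P,N],[Z,P,N,Z,N,P],[Z,N,P,N,Z,P],[Z,N,N,P,P,Z],[N,P,P,P,P,P]],[[Z,Z,P,P,N,N],[Z,P,Z,N,P,N],[P,Z,Z,N,N,P],[P,N,N,Z,Z,N],[N,P,N,Z,N,Z],[N,N,P,N,Z,Z]],[[Z,Z,P,P,N,N],[Z,N,P,N,Z,P],[P,P,Z,Z,N,P],[P,N,Z,P,P,Z],[N,Z,N,P,Z,P],[N,P,P,Z,P,Z]]]"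
  by (simp add: cands_def cond_def colok_def colsok_def colk_def gen_def numeral_eq_Suc)

lemma srch_z_14: "srch 0 5 [[Z,Z,P,N,N,N]] (cands 0 [Z,Z,P,N,N,N]) = [[[Z,Z,P,N,N,N],[Z,N,N,Z,P,N],[P,N,Z,N,Z,P],[N,Z,N,Z,N,P],[N,P,Z,N,P,Z],[N,N,P,P,Z,Z]]]"
  by (simp add: cands_def cond_def colok_def colsok_def colk_def gen_def numeral_eq_Suc)

lemma srch_z_15: "srch 0 5 [[Z,Z,N,N,N,N]] (cands 0 [Z,Z,N,N,N,N]) = []"
  by (simp add: cands_def cond_def colok_def colsok_def colk_def gen_def numeral_eq_Suc)

lemma srch_z_16: "srch 0 5 [[Z,P,P,P,P,P]] (cands 0 [Z,P,P,P,P,P]) = [[[Z,P,P,P,P,P],[P,Z,P,P,N,N],[P,P,Z,N,P,N],[P,P,N,Z,N,P],[P,N,P,N,Z,P],[P,N,N,P,P,Z]]]"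
  by (simp add: cands_def cond_def colok_def colsok_def colk_def gen_def numeral_eq_Suc)

lemma srch_z_17: "srch 0 5 [[Z,P,P,P,P,N]] (cands 0 [Z,P,P,P,P,N]) = [[[Z,P,P,P,P,N],[P,Z,P,P,N,P],[P,P,Z,N,P,P],[P,P,N,Z,N,N],[P,N,P,N,Z,N],[N,P,P,N,N,Z]],[[Z,P,P,P,P,N],[P,Z,P,P,N,P],[P,P,Z,N,N,N],[P,P,N,Z,P,P],[P,N,N,P,Z,N],[N,P,N,P,N,Z]],[[Z,P,P,P,P,N],[P,Z,P,N,N,N],[P,P,Z,P,N,P],[P,N,P,Z,P,P],[P,N,N,P,Z,N],[N,N,P,P,N,Z]]]"
  by (simp add: cands_def cond_def colok_def colsok_def colk_def gen_def numeral_eq_Suc)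

lemma srch_z_18: "srch 0 5 [[Z,P,P,P,N,N]] (cands 0 [Z,P,P,P,N,N]) = [[[Z,P,P,P,N,N],[P,Z,P,P,P,P],[P,P,Z,N,P,N],[P,P,N,Z,N,P],[N,P,P,N,Z,P],[N,P,N,P,P,Z]],[[Z,P,P,P,N,N],[P,Z,P,N,P,N],[P,P,Z,P,P,P],[P,N,P,Z,N,P],[N,P,P,N,Z,P],[N,N,P,P,P,Z]],[[Z,P,P,P,N,N],[P,Z,P,N,P,N],[P,P,Z,N,N,P],[P,N,N,Z,N,N],[N,P,N,N,Z,N],[N,N,P,N,N,Z]],[[Z,P,P,P,N,N],[P,Z,N,N,N,N],[P,N,Z,P,P,N],[P,N,P,Z,N,P],[N,N,P,N,Z,N],[N,N,N,P,N,Z]]]"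
  by (simp add: cands_def cond_def colok_def colsok_def colk_def gen_def numeral_eq_Suc)

lemma srch_z_19: "srch 0 5 [[Z,P,P,N,N,N]] (cands 0 [Z,P,P,N,N,N]) = [[[Z,P,P,N,N,N],[P,Z,P,P,P,N],[P,P,Z,P,N,P],[N,P,P,Z,P,P],[N,P,N,P,Z,N],[N,N,P,P,N,Z]],[[Z,P,P,N,N,N],[P,Z,N,P,N,N],[P,N,Z,N,P,N],[N,P,N,Z,P,N],[N,N,P,P,Z,N],[N,N,N,N,N,Z]]]"
  by (simp add: cands_def cond_def colok_def colsok_def colk_def gen_def numeral_eq_Suc)

lemma srch_z_20: "srch 0 5 [[Z,P,N,N,N,N]] (cands 0 [Z,P,N,N,N,N]) = [[[Z,P,N,N,N,N],[P,Z,P,P,N,N],[N,P,Z,P,P,N],[N,P,P,Z,N,P],[N,N,P,N,Z,N],[N,N,N,P,N,Z]]]"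
  by (simp add: cands_def cond_def colok_def colsok_def colk_def gen_def numeral_eq_Suc)

lemma srch_z_21: "srch 0 5 [[Z,N,N,N,N,N]] (cands 0 [Z,N,N,N,N,N]) = [[[Z,N,N,N,N,N],[N,Z,P,P,N,N],[N,P,Z,N,P,N],[N,P,N,Z,N,P],[N,N,P,N,Z,P],[N,N,N,P,P,Z]]]"
  by (simp add: cands_def cond_def colok_def colsok_def colk_def gen_def numeral_eq_Suc)

lemma srch_z_22: "srch 0 5 [[P,P,P,P,P,P]] (cands 0 [P,P,P,P,P,P]) = []"
  by (simp add: cands_def cond_def colok_def colsok_def colk_def gen_def numeral_eq_Suc)

lemma srch_z_23: "srch 0 5 [[P,P,P,P,P,N]] (cands 0 [P,P,P,P,P,N]) = []"
  by (simp add: cands_def cond_def colok_def colsok_def colk_def gen_def numeral_eq_Suc)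

lemma srch_z_24: "srch 0 5 [[P,P,P,P,N,N]] (cands 0 [P,P,P,P,N,N]) = []"
  by (simp add: cands_def cond_def colok_def colsok_def colk_def gen_def numeral_eq_Suc)

lemma srch_z_25: "srch 0 5 [[P,P,P,N,N,N]] (cands 0 [P,P,P,N,N,N]) = []"
  by (simp add: cands_def cond_def colok_def colsok_def colk_def gen_def numeral_eq_Suc)

lemma srch_z_26: "srch 0 5 [[P,P,N,N,N,N]] (cands 0 [P,P,N,N,N,N]) = []"
  by (simp add: cands_def cond_def colok_def colsok_def colk_def gen_def numeral_eq_Suc)

lemma srch_z_27: "srch 0 5 [[P,N,N,N,N,N]] (cands 0 [P,N,N,N,N,N]) = []"
  by (simp add: cands_def cond_def colok_def colsok_def colk_def gen_def numeral_eq_Suc)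

lemma srch_z_28: "srch 0 5 [[N,N,N,N,N,N]] (cands 0 [N,N,N,N,N,N]) = []"
  by (simp add: cands_def cond_def colok_def colsok_def colk_def gen_def numeral_eq_Suc)

lemma srch_p_29: "srch 1 5 [[Z,Z,Z,Z,Z,Z]] (cands 1 [Z,Z,Z,Z,Z,Z]) = []"
  by (simp add: cands_def cond_def colok_def colsok_def colk_def gen_def numeral_eq_Suc)

lemma srch_p_30: "srch 1 5 [[Z,Z,Z,Z,Z,P]] (cands 1 [Z,Z,Z,Z,Z,P]) = []"
  by (simp add: cands_def cond_def colok_def colsok_def colk_def gen_def numeral_eq_Suc)

lemma srch_p_31: "srch 1 5 [[Z,Z,Z,Z,Z,N]] (cands 1 [Z,Z,Z,Z,Z,N]) = []"
  by (simp add: cands_def cond_def colok_def colsok_def colk_def gen_def numeral_eq_Suc)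

lemma srch_p_32: "srch 1 5 [[Z,Z,Z,Z,P,P]] (cands 1 [Z,Z,Z,Z,P,P]) = []"
  by (simp add: cands_def cond_def colok_def colsok_def colk_def gen_def numeral_eq_Suc)

lemma srch_p_33: "srch 1 5 [[Z,Z,Z,Z,P,N]] (cands 1 [Z,Z,Z,Z,P,N]) = []"
  by (simp add: cands_def cond_def colok_def colsok_def colk_def gen_def numeral_eq_Suc)

lemma srch_p_34: "srch 1 5 [[Z,Z,Z,Z,N,N]] (cands 1 [Z,Z,Z,Z,N,N]) = []"
  by (simp add: cands_def cond_def colok_def colsok_def colk_def gen_def numeral_eq_Suc)

lemma srch_p_35: "srch 1 5 [[Z,Z,Z,P,P,P]] (cands 1 [Z,Z,Z,P,P,P]) = []"
  by (simp add: cands_def cond_def colok_def colsok_def colk_def gen_def numeral_eq_Suc)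

lemma srch_p_36: "srch 1 5 [[Z,Z,Z,P,P,N]] (cands 1 [Z,Z,Z,P,P,N]) = []"
  by (simp add: cands_def cond_def colok_def colsok_def colk_def gen_def numeral_eq_Suc)

lemma srch_p_37: "srch 1 5 [[Z,Z,Z,P,N,N]] (cands 1 [Z,Z,Z,P,N,N]) = []"
  by (simp add: cands_def cond_def colok_def colsok_def colk_def gen_def numeral_eq_Suc)

lemma srch_p_38: "srch 1 5 [[Z,Z,Z,N,N,N]] (cands 1 [Z,Z,Z,N,N,N]) = []"
  by (simp add: cands_def cond_def colok_def colsok_def colk_def gen_def numeral_eq_Suc)

lemma srch_p_39: "srch 1 5 [[Z,Z,P,P,P,P]] (cands 1 [Z,Z,P,P,P,P]) = []"
  by (simp add: cands_def cond_def colok_def colsok_def colk_def gen_def numeral_eq_Suc)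

lemma srch_p_40: "srch 1 5 [[Z,Z,P,P,P,N]] (cands 1 [Z,Z,P,P,P,N]) = []"
  by (simp add: cands_def cond_def colok_def colsok_def colk_def gen_def numeral_eq_Suc)

lemma srch_p_41: "srch 1 5 [[Z,Z,P,P,N,N]] (cands 1 [Z,Z,P,P,N,N]) = []"
  by (simp add: cands_def cond_def colok_def colsok_def colk_def gen_def numeral_eq_Suc)

lemma srch_p_42: "srch 1 5 [[Z,Z,P,N,N,N]] (cands 1 [Z,Z,P,N,N,N]) = []"
  by (simp add: cands_def cond_def colok_def colsok_def colk_def gen_def numeral_eq_Suc)

lemma srch_p_43: "srch 1 5 [[Z,Z,N,N,N,N]] (cands 1 [Z,Z,N,N,N,N]) = []"
  by (simp add: cands_def cond_def colok_def colsok_def colk_def gen_def numeral_eq_Suc)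

lemma srch_p_44: "srch 1 5 [[Z,P,P,P,P,P]] (cands 1 [Z,P,P,P,P,P]) = []"
  by (simp add: cands_def cond_def colok_def colsok_def colk_def gen_def numeral_eq_Suc)

lemma srch_p_45: "srch 1 5 [[Z,P,P,P,P,N]] (cands 1 [Z,P,P,P,P,N]) = []"
  by (simp add: cands_def cond_def colok_def colsok_def colk_def gen_def numeral_eq_Suc)

lemma srch_p_46: "srch 1 5 [[Z,P,P,P,N,N]] (cands 1 [Z,P,P,P,N,N]) = []"
  by (simp add: cands_def cond_def colok_def colsok_def colk_def gen_def numeral_eq_Suc)

lemma srch_p_47: "srch 1 5 [[Z,P,P,N,N,N]] (cands 1 [Z,P,P,N,N,N]) = []"
  by (simp add: cands_def cond_def colok_def colsok_def colk_def gen_def numeral_eq_Suc)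

lemma srch_p_48: "srch 1 5 [[Z,P,N,N,N,N]] (cands 1 [Z,P,N,N,N,N]) = []"
  by (simp add: cands_def cond_def colok_def colsok_def colk_def gen_def numeral_eq_Suc)

lemma srch_p_49: "srch 1 5 [[Z,N,N,N,N,N]] (cands 1 [Z,N,N,N,N,N]) = []"
  by (simp add: cands_def cond_def colok_def colsok_def colk_def gen_def numeral_eq_Suc)

lemma srch_p_50: "srch 1 5 [[P,P,P,P,P,P]] (cands 1 [P,P,P,P,P,P]) = []"
  by (simp add: cands_def cond_def colok_def colsok_def colk_def gen_def numeral_eq_Suc)

lemma srch_p_51: "srch 1 5 [[P,P,P,P,P,N]] (cands 1 [P,P,P,P,P,N]) = []"
  by (simp add: cands_def cond_def colok_def colsok_def colk_def gen_def numeral_eq_Suc)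

lemma srch_p_52: "srch 1 5 [[P,P,P,P,N,N]] (cands 1 [P,P,P,P,N,N]) = []"
  by (simp add: cands_def cond_def colok_def colsok_def colk_def gen_def numeral_eq_Suc)

lemma srch_p_53: "srch 1 5 [[P,P,P,N,N,N]] (cands 1 [P,P,P,N,N,N]) = []"
  by (simp add: cands_def cond_def colok_def colsok_def colk_def gen_def numeral_eq_Suc)

lemma srch_p_54: "srch 1 5 [[P,P,N,N,N,N]] (cands 1 [P,P,N,N,N,N]) = []"
  by (simp add: cands_def cond_def colok_def colsok_def colk_def gen_def numeral_eq_Suc)

lemma srch_p_55: "srch 1 5 [[P,N,N,N,N,N]] (cands 1 [P,N,N,N,N,N]) = []"
  by (simp add: cands_def cond_def colok_def colsok_def colk_def gen_def numeral_eq_Suc)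

lemma srch_p_56: "srch 1 5 [[N,N,N,N,N,N]] (cands 1 [N,N,N,N,N,N]) = []"
  by (simp add: cands_def cond_def colok_def colsok_def colk_def gen_def numeral_eq_Suc)

lemma srch_n_57: "srch (-1) 5 [[Z,Z,Z,Z,Z,Z]] (cands (-1) [Z,Z,Z,Z,Z,Z]) = []"
  by (simp add: cands_def cond_def colok_def colsok_def colk_def gen_def numeral_eq_Suc)

lemma srch_n_58: "srch (-1) 5 [[Z,Z,Z,Z,Z,P]] (cands (-1) [Z,Z,Z,Z,Z,P]) = []"
  by (simp add: cands_def cond_def colok_def colsok_def colk_def gen_def numeral_eq_Suc)

lemma srch_n_59: "srch (-1) 5 [[Z,Z,Z,Z,Z,N]] (cands (-1) [Z,Z,Z,Z,Z,N]) = []"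
  by (simp add: cands_def cond_def colok_def colsok_def colk_def gen_def numeral_eq_Suc)

lemma srch_n_60: "srch (-1) 5 [[Z,Z,Z,Z,P,P]] (cands (-1) [Z,Z,Z,Z,P,P]) = []"
  by (simp add: cands_def cond_def colok_def colsok_def colk_def gen_def numeral_eq_Suc)

lemma srch_n_61: "srch (-1) 5 [[Z,Z,Z,Z,P,N]] (cands (-1) [Z,Z,Z,Z,P,N]) = []"
  by (simp add: cands_def cond_def colok_def colsok_def colk_def gen_def numeral_eq_Suc)

lemma srch_n_62: "srch (-1) 5 [[Z,Z,Z,Z,N,N]] (cands (-1) [Z,Z,Z,Z,N,N]) = []"
  by (simp add: cands_def cond_def colok_def colsok_def colk_def gen_def numeral_eq_Suc)

lemma srch_n_63: "srch (-1) 5 [[Z,Z,Z,P,P,P]] (cands (-1) [Z,Z,Z,P,P,P]) = []"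
  by (simp add: cands_def cond_def colok_def colsok_def colk_def gen_def numeral_eq_Suc)

lemma srch_n_64: "srch (-1) 5 [[Z,Z,Z,P,P,N]] (cands (-1) [Z,Z,Z,P,P,N]) = []"
  by (simp add: cands_def cond_def colok_def colsok_def colk_def gen_def numeral_eq_Suc)

lemma srch_n_65: "srch (-1) 5 [[Z,Z,Z,P,N,N]] (cands (-1) [Z,Z,Z,P,N,N]) = []"
  by (simp add: cands_def cond_def colok_def colsok_def colk_def gen_def numeral_eq_Suc)

lemma srch_n_66: "srch (-1) 5 [[Z,Z,Z,N,N,N]] (cands (-1) [Z,Z,Z,N,N,N]) = []"
  by (simp add: cands_def cond_def colok_def colsok_def colk_def gen_def numeral_eq_Suc)

lemma srch_n_67: "srch (-1) 5 [[Z,Z,P,P,P,P]] (cands (-1) [Z,Z,P,P,P,P]) = []"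
  by (simp add: cands_def cond_def colok_def colsok_def colk_def gen_def numeral_eq_Suc)

lemma srch_n_68: "srch (-1) 5 [[Z,Z,P,P,P,N]] (cands (-1) [Z,Z,P,P,P,N]) = []"
  by (simp add: cands_def cond_def colok_def colsok_def colk_def gen_def numeral_eq_Suc)

lemma srch_n_69: "srch (-1) 5 [[Z,Z,P,P,N,N]] (cands (-1) [Z,Z,P,P,N,N]) = []"
  by (simp add: cands_def cond_def colok_def colsok_def colk_def gen_def numeral_eq_Suc)

lemma srch_n_70: "srch (-1) 5 [[Z,Z,P,N,N,N]] (cands (-1) [Z,Z,P,N,N,N]) = []"
  by (simp add: cands_def cond_def colok_def colsok_def colk_def gen_def numeral_eq_Suc)

lemma srch_n_71: "srch (-1) 5 [[Z,Z,N,N,N,N]] (cands (-1) [Z,Z,N,N,N,N]) = []"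
  by (simp add: cands_def cond_def colok_def colsok_def colk_def gen_def numeral_eq_Suc)

lemma srch_n_72: "srch (-1) 5 [[Z,P,P,P,P,P]] (cands (-1) [Z,P,P,P,P,P]) = []"
  by (simp add: cands_def cond_def colok_def colsok_def colk_def gen_def numeral_eq_Suc)

lemma srch_n_73: "srch (-1) 5 [[Z,P,P,P,P,N]] (cands (-1) [Z,P,P,P,P,N]) = []"
  by (simp add: cands_def cond_def colok_def colsok_def colk_def gen_def numeral_eq_Suc)

lemma srch_n_74: "srch (-1) 5 [[Z,P,P,P,N,N]] (cands (-1) [Z,P,P,P,N,N]) = []"
  by (simp add: cands_def cond_def colok_def colsok_def colk_def gen_def numeral_eq_Suc)

lemma srch_n_75: "srch (-1) 5 [[Z,P,P,N,N,N]] (cands (-1) [Z,P,P,N,N,N]) = []"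
  by (simp add: cands_def cond_def colok_def colsok_def colk_def gen_def numeral_eq_Suc)

lemma srch_n_76: "srch (-1) 5 [[Z,P,N,N,N,N]] (cands (-1) [Z,P,N,N,N,N]) = []"
  by (simp add: cands_def cond_def colok_def colsok_def colk_def gen_def numeral_eq_Suc)

lemma srch_n_77: "srch (-1) 5 [[Z,N,N,N,N,N]] (cands (-1) [Z,N,N,N,N,N]) = []"
  by (simp add: cands_def cond_def colok_def colsok_def colk_def gen_def numeral_eq_Suc)

lemma srch_n_78: "srch (-1) 5 [[P,P,P,P,P,P]] (cands (-1) [P,P,P,P,P,P]) = []"
  by (simp add: cands_def cond_def colok_def colsok_def colk_def gen_def numeral_eq_Suc)

lemma srch_n_79: "srch (-1) 5 [[P,P,P,P,P,N]] (cands (-1) [P,P,P,P,P,N]) = []"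
  by (simp add: cands_def cond_def colok_def colsok_def colk_def gen_def numeral_eq_Suc)

lemma srch_n_80: "srch (-1) 5 [[P,P,P,P,N,N]] (cands (-1) [P,P,P,P,N,N]) = []"
  by (simp add: cands_def cond_def colok_def colsok_def colk_def gen_def numeral_eq_Suc)

lemma srch_n_81: "srch (-1) 5 [[P,P,P,N,N,N]] (cands (-1) [P,P,P,N,N,N]) = []"
  by (simp add: cands_def cond_def colok_def colsok_def colk_def gen_def numeral_eq_Suc)

lemma srch_n_82: "srch (-1) 5 [[P,P,N,N,N,N]] (cands (-1) [P,P,N,N,N,N]) = []"
  by (simp add: cands_def cond_def colok_def colsok_def colk_def gen_def numeral_eq_Suc)

lemma srch_n_83: "srch (-1) 5 [[P,N,N,N,N,N]] (cands (-1) [P,N,N,N,N,N]) = []"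
  by (simp add: cands_def cond_def colok_def colsok_def colk_def gen_def numeral_eq_Suc)

lemma srch_n_84: "srch (-1) 5 [[N,N,N,N,N,N]] (cands (-1) [N,N,N,N,N,N]) = []"
  by (simp add: cands_def cond_def colok_def colsok_def colk_def gen_def numeral_eq_Suc)

lemma topS_vals: "topS 1 = []" "topS (-1) = []" "topS 0 = sols0"
proof -
  show "topS 1 = []" unfolding top_cands firsts_val by (simp only: list.map srch_p_29 srch_p_30 srch_p_31 srch_p_32 srch_p_33 srch_p_34 srch_p_35 srch_p_36 srch_p_37 srch_p_38 srch_p_39 srch_p_40 srch_p_41 srch_p_42 srch_p_43 srch_p_44 srch_p_45 srch_p_46 srch_p_47 srch_p_48 srch_p_49 srch_p_50 srch_p_51 srch_p_52 srch_p_53 srch_p_54 srch_p_55 srch_p_56) simp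
  show "topS (-1) = []" unfolding top_cands firsts_val by (simp only: list.map srch_n_57 srch_n_58 srch_n_59 srch_n_60 srch_n_61 srch_n_62 srch_n_63 srch_n_64 srch_n_65 srch_n_66 srch_n_67 srch_n_68 srch_n_69 srch_n_70 srch_n_71 srch_n_72 srch_n_73 srch_n_74 srch_n_75 srch_n_76 srch_n_77 srch_n_78 srch_n_79 srch_n_80 srch_n_81 srch_n_82 srch_n_83 srch_n_84) simp
  show "topS 0 = sols0" unfolding top_cands firsts_val by (simp only: list.map srch_z_1 srch_z_2 srch_z_3 srch_z_4 srch_z_5 srch_z_6 srch_z_7 srch_z_8 srch_z_9 srch_z_10 srch_z_11 srch_z_12 srch_z_13 srch_z_14 srch_z_15 srch_z_16 srch_z_17 srch_z_18 srch_z_19 srch_z_20 srch_z_21 srch_z_22 srch_z_23 srch_z_24 srch_z_25 srch_z_26 srch_z_27 srch_z_28) (simp add: sols0_def)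
qed


lemma sw_0: "a = \<i> \<or> a = -\<i> \<Longrightarrow> \<exists>sl ql d1 d2. wit a [[Z,Z,Z,Z,Z,P],[Z,P,P,N,N,N],[P,Z,N,P,N,N],[P,N,Z,N,P,N],[N,P,N,Z,P,N],[N,N,P,P,Z,N]] sl ql d1 d2"
  using wit_0_0 wit_0_1 by blast

lemma sw_1: "a = \<i> \<or> a = -\<i> \<Longrightarrow> \<exists>sl ql d1 d2. wit a [[Z,Z,Z,Z,Z,N],[Z,P,P,N,N,P],[P,Z,N,P,N,P],[P,N,Z,N,P,P],[N,P,N,Z,P,P],[N,N,P,P,Z,P]] sl ql d1 d2"
  using wit_1_0 wit_1_1 by blast

lemma sw_2: "a = \<i> \<or> a = -\<i> \<Longrightarrow> \<exists>sl ql d1 d2. wit a [[Z,Z,P,P,P,N],[Z,P,Z,P,N,P],[P,Z,Z,N,P,P],[P,P,N,Z,Z,N],[P,N,P,Z,N,Z],[N,P,P,N,Z,Z]] sl ql d1 d2"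
  using wit_2_0 wit_2_1 by blast

lemma sw_3: "a = \<i> \<or> a = -\<i> \<Longrightarrow> \<exists>sl ql d1 d2. wit a [[Z,Z,P,P,N,N],[Z,P,Z,N,P,N],[Z,P,N,Z,N,P],[Z,N,P,N,Z,P],[Z,N,N,P,P,Z],[P,N,N,N,N,N]] sl ql d1 d2"
  using wit_3_0 wit_3_1 by blast

lemma sw_4: "a = \<i> \<or> a = -\<i> \<Longrightarrow> \<exists>sl ql d1 d2. wit a [[Z,Z,P,P,N,N],[Z,P,Z,N,P,N],[Z,P,N,Z,N,P],[Z,N,P,N,Z,P],[Z,N,N,P,P,Z],[N,P,P,P,P,P]] sl ql d1 d2"
  using wit_4_0 wit_4_1 by blast

lemma sw_5: "a = \<i> \<or> a = -\<i> \<Longrightarrow> \<exists>sl ql d1 d2. wit a [[Z,Z,P,P,N,N],[Z,P,Z,N,P,N],[P,Z,Z,N,N,P],[P,N,N,Z,Z,N],[N,P,N,Z,N,Z],[N,N,P,N,Z,Z]] sl ql d1 d2"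
  using wit_5_0 wit_5_1 by blast

lemma sw_6: "a = \<i> \<or> a = -\<i> \<Longrightarrow> \<exists>sl ql d1 d2. wit a [[Z,Z,P,P,N,N],[Z,N,P,N,Z,P],[P,P,Z,Z,N,P],[P,N,Z,P,P,Z],[N,Z,N,P,Z,P],[N,P,P,Z,P,Z]] sl ql d1 d2"
  using wit_6_0 wit_6_1 by blast

lemma sw_7: "a = \<i> \<or> a = -\<i> \<Longrightarrow> \<exists>sl ql d1 d2. wit a [[Z,Z,P,N,N,N],[Z,N,N,Z,P,N],[P,N,Z,N,Z,P],[N,Z,N,Z,N,P],[N,P,Z,N,P,Z],[N,N,P,P,Z,Z]] sl ql d1 d2"
  using wit_7_0 wit_7_1 by blast

lemma sw_8: "a = \<i> \<or> a = -\<i> \<Longrightarrow> \<exists>sl ql d1 d2. wit a [[Z,P,P,P,P,P],[P,Z,P,P,N,N],[P,P,Z,N,P,N],[P,P,N,Z,N,P],[P,N,P,N,Z,P],[P,N,N,P,P,Z]] sl ql d1 d2"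
  using wit_8_0 wit_8_1 by blast

lemma sw_9: "a = \<i> \<or> a = -\<i> \<Longrightarrow> \<exists>sl ql d1 d2. wit a [[Z,P,P,P,P,N],[P,Z,P,P,N,P],[P,P,Z,N,P,P],[P,P,N,Z,N,N],[P,N,P,N,Z,N],[N,P,P,N,N,Z]] sl ql d1 d2"
  using wit_9_0 wit_9_1 by blast

lemma sw_10: "a = \<i> \<or> a = -\<i> \<Longrightarrow> \<exists>sl ql d1 d2. wit a [[Z,P,P,P,P,N],[P,Z,P,P,N,P],[P,P,Z,N,N,N],[P,P,N,Z,P,P],[P,N,N,P,Z,N],[N,P,N,P,N,Z]] sl ql d1 d2"
  using wit_10_0 wit_10_1 by blast

lemma sw_11: "a = \<i> \<or> a = -\<i> \<Longrightarrow> \<exists>sl ql d1 d2. wit a [[Z,P,P,P,P,N],[P,Z,P,N,N,N],[P,P,Z,P,N,P],[P,N,P,Z,P,P],[P,N,N,P,Z,N],[N,N,P,P,N,Z]] sl ql d1 d2"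
  using wit_11_0 wit_11_1 by blast

lemma sw_12: "a = \<i> \<or> a = -\<i> \<Longrightarrow> \<exists>sl ql d1 d2. wit a [[Z,P,P,P,N,N],[P,Z,P,P,P,P],[P,P,Z,N,P,N],[P,P,N,Z,N,P],[N,P,P,N,Z,P],[N,P,N,P,P,Z]] sl ql d1 d2"
  using wit_12_0 wit_12_1 by blast

lemma sw_13: "a = \<i> \<or> a = -\<i> \<Longrightarrow> \<exists>sl ql d1 d2. wit a [[Z,P,P,P,N,N],[P,Z,P,N,P,N],[P,P,Z,P,P,P],[P,N,P,Z,N,P],[N,P,P,N,Z,P],[N,N,P,P,P,Z]] sl ql d1 d2"
  using wit_13_0 wit_13_1 by blast

lemma sw_14: "a = \<i> \<or> a = -\<i> \<Longrightarrow> \<exists>sl ql d1 d2. wit a [[Z,P,P,P,N,N],[P,Z,P,N,P,N],[P,P,Z,N,N,P],[P,N,N,Z,N,N],[N,P,N,N,Z,N],[N,N,P,N,N,Z]] sl ql d1 d2"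
  using wit_14_0 wit_14_1 by blast

lemma sw_15: "a = \<i> \<or> a = -\<i> \<Longrightarrow> \<exists>sl ql d1 d2. wit a [[Z,P,P,P,N,N],[P,Z,N,N,N,N],[P,N,Z,P,P,N],[P,N,P,Z,N,P],[N,N,P,N,Z,N],[N,N,N,P,N,Z]] sl ql d1 d2"
  using wit_15_0 wit_15_1 by blast

lemma sw_16: "a = \<i> \<or> a = -\<i> \<Longrightarrow> \<exists>sl ql d1 d2. wit a [[Z,P,P,N,N,N],[P,Z,P,P,P,N],[P,P,Z,P,N,P],[N,P,P,Z,P,P],[N,P,N,P,Z,N],[N,N,P,P,N,Z]] sl ql d1 d2"
  using wit_16_0 wit_16_1 by blast

lemma sw_17: "a = \<i> \<or> a = -\<i> \<Longrightarrow> \<exists>sl ql d1 d2. wit a [[Z,P,P,N,N,N],[P,Z,N,P,N,N],[P,N,Z,N,P,N],[N,P,N,Z,P,N],[N,N,P,P,Z,N],[N,N,N,N,N,Z]] sl ql d1 d2"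
  using wit_17_0 wit_17_1 by blast

lemma sw_18: "a = \<i> \<or> a = -\<i> \<Longrightarrow> \<exists>sl ql d1 d2. wit a [[Z,P,N,N,N,N],[P,Z,P,P,N,N],[N,P,Z,P,P,N],[N,P,P,Z,N,P],[N,N,P,N,Z,N],[N,N,N,P,N,Z]] sl ql d1 d2"
  using wit_18_0 wit_18_1 by blast

lemma sw_19: "a = \<i> \<or> a = -\<i> \<Longrightarrow> \<exists>sl ql d1 d2. wit a [[Z,N,N,N,N,N],[N,Z,P,P,N,N],[N,P,Z,N,P,N],[N,P,N,Z,N,P],[N,N,P,N,Z,P],[N,N,N,P,P,Z]] sl ql d1 d2"
  using wit_19_0 wit_19_1 by blast

lemma sols0_wit: "M \<in> set sols0 \<Longrightarrow> a = \<i> \<or> a = -\<i> \<Longrightarrow> \<exists>sl ql d1 d2. wit a M sl ql d1 d2"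
proof -
  assume M: "M \<in> set sols0" and a: "a = \<i> \<or> a = -\<i>"
  have "M = [[Z,Z,Z,Z,Z,P],[Z,P,P,N,N,N],[P,Z,N,P,N,N],[P,N,Z,N,P,N],[N,P,N,Z,P,N],[N,N,P,P,Z,N]] \<or> M = [[Z,Z,Z,Z,Z,N],[Z,P,P,N,N,P],[P,Z,N,P,N,P],[P,N,Z,N,P,P],[N,P,N,Z,P,P],[N,N,P,P,Z,P]] \<or> M = [[Z,Z,P,P,P,N],[Z,P,Z,P,N,P],[P,Z,Z,N,P,P],[P,P,N,Z,Z,N],[P,N,P,Z,N,Z],[N,P,P,N,Z,Z]] \<or> M = [[Z,Z,P,P,N,N],[Z,P,Z,N,P,N],[Z,P,N,Z,N,P],[Z,N,P,N,Z,P],[Z,N,N,P,P,Z],[P,N,N,N,N,N]] \<or> M = [[Z,Z,P,P,N,N],[Z,P,Z,N,P,N],[Z,P,N,Z,N,P],[Z,N,P,N,Z,P],[Z,N,N,P,P,Z],[N,P,P,P,P,P]] \<or> M = [[Z,Z,P,P,N,N],[Z,P,Z,N,P,N],[P,Z,Z,N,N,P],[P,N,N,Z,Z,N],[N,P,N,Z,N,Z],[N,N,P,N,Z,Z]] \<or> M = [[Z,Z,P,P,N,N],[Z,N,P,N,Z,P],[P,P,Z,Z,N,P],[P,N,Z,P,P,Z],[N,Z,N,P,Z,P],[N,P,P,Z,P,Z]] \<or> M = [[Z,Z,P,N,N,N],[Z,N,N,Z,P,N],[P,N,Z,N,Z,P],[N,Z,N,Z,N,P],[N,P,Z,N,P,Z],[N,N,P,P,Z,Z]]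 \<or> M = [[Z,P,P,P,P,P],[P,Z,P,P,N,N],[P,P,Z,N,P,N],[P,P,N,Z,N,P],[P,N,P,N,Z,P],[P,N,N,P,P,Z]] \<or> M = [[Z,P,P,P,P,N],[P,Z,P,P,N,P],[P,P,Z,N,P,P],[P,P,N,Z,N,N],[P,N,P,N,Z,N],[N,P,P,N,N,Z]] \<or> M = [[Z,P,P,P,P,N],[P,Z,P,P,N,P],[P,P,Z,N,N,N],[P,P,N,Z,P,P],[P,N,N,P,Z,N],[N,P,N,P,N,Z]] \<or> M = [[Z,P,P,P,P,N],[P,Z,P,N,N,N],[P,P,Z,P,N,P],[P,N,P,Z,P,P],[P,N,N,P,Z,N],[N,N,P,P,N,Z]] \<or> M = [[Z,P,P,P,N,N],[P,Z,P,P,P,P],[P,P,Z,N,P,N],[P,P,N,Z,N,P],[N,P,P,N,Z,P],[N,P,N,P,P,Z]] \<or> M = [[Z,P,P,P,N,N],[P,Z,P,N,P,N],[P,P,Z,P,P,P],[P,N,P,Z,N,P],[N,P,P,N,Z,P],[N,N,P,P,P,Z]] \<or> M = [[Z,P,P,P,N,N],[P,Z,P,N,P,N],[P,P,Z,N,N,P],[P,N,N,Z,N,N],[N,P,N,N,Z,N],[N,N,P,N,N,Z]] \<or> M = [[Z,P,P,P,N,N],[P,Z,N,N,N,N],[P,N,Z,P,P,N],[P,N,P,Z,N,P],[N,N,P,N,Z,N],[N,N,N,P,N,Z]] \<or> M = [[Z,P,P,N,N,N],[P,Z,P,P,P,N],[P,P,Z,P,N,P],[N,P,P,Z,P,P],[N,P,N,P,Z,N],[N,N,P,P,N,Z]]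 \<or> M = [[Z,P,P,N,N,N],[P,Z,N,P,N,N],[P,N,Z,N,P,N],[N,P,N,Z,P,N],[N,N,P,P,Z,N],[N,N,N,N,N,Z]] \<or> M = [[Z,P,N,N,N,N],[P,Z,P,P,N,N],[N,P,Z,P,P,N],[N,P,P,Z,N,P],[N,N,P,N,Z,N],[N,N,N,P,N,Z]] \<or> M = [[Z,N,N,N,N,N],[N,Z,P,P,N,N],[N,P,Z,N,P,N],[N,P,N,Z,N,P],[N,N,P,N,Z,P],[N,N,N,P,P,Z]]" using M by (simp add: sols0_def)
  then show ?thesis using a sw_0 sw_1 sw_2 sw_3 sw_4 sw_5 sw_6 sw_7 sw_8 sw_9 sw_10 sw_11 sw_12 sw_13 sw_14 sw_15 sw_16 sw_17 sw_18 sw_19 by (elim disjE) simp_all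
qed


lemma lexless_chain:
  assumes "\<And>k. k < 5 \<Longrightarrow> lexless (R!k) (R!Suc k)"
  shows "i < j \<Longrightarrow> j < 6 \<Longrightarrow> lexless (R!i) (R!j)"
proof (induction j)
  case 0 then show ?case by simp
next
  case (Suc j)
  show ?case
  proof (cases "i = j")
    case True then show ?thesis using assms Suc.prems by simp
  next
    case False
    then have "lexless (R!i) (R!j)" using Suc by simp
    moreover have "lexless (R!j) (R!Suc j)" using assms Suc.prems by simp
    ultimately show ?thesis by (rule lexless_trans)
  qed
qed

theorem mainTheorem6:
  fixes a :: complex and H :: "complex^6^6"
  assumes "norm a = 1"
    and "complex_hadamard H"
    and "\<forall>i j. H $ i $ j \<in> {1, a, -a}"
  shows "complex_equivalent H H1"
proof -
  note na = assms(1) and hh = assms(2) and ent = assms(3)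
  have aa: "a * cnj a = 1" using na by (simp add: complex_norm_square[symmetric])
  have sq: "(Re a)^2 + (Im a)^2 = 1" using na by (simp add: cmod_def)
  show ?thesis
  proof (cases "Im a = 0")
    case True
    then have "(Re a)^2 = 1" using sq by simp
    then have "Re a = 1 \<or> Re a = -1" by (metis power2_eq_1_iff)
    then have "a = 1 \<or> a = -1" using True by (auto simp: complex_eq_iff)
    then have pm: "a = 1 \<or> a = -1" .
    have "H$i$j \<in> {1,-1}" for i j
    proof -
      have "H$i$j \<in> {1,a,-a}" using ent by blast
      then show ?thesis using pm by auto
    qed
    then show ?thesis using real_case[OF hh] by blast
  next
    case im: False
    have a1: "a \<noteq> 1" using im by auto
    have re1: "\<bar>Re a\<bar> < 1"
    proof -
      have "(Im a)^2 > 0" using im by simp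
      then have "(Re a)^2 < 1" using sq by linarith
      then show ?thesis by (simp add: abs_square_less_1)
    qed
    define K where "K = (\<lambda>u j. code a (H$u$j))"
    have vK: "val a (K u j) = H$u$j" for u j unfolding K_def using val_code ent a1 by blast
    obtain s p where bs: "bij s" and bp: "bij p"
      and rws: "\<forall>k<5. \<not> lexless (RW K s p (Suc k)) (RW K s p k)"
      and cls: "\<forall>j<5. \<not> lexless (CL K s p (Suc j)) (CL K s p j)"
      using sort_exists[of K] by blast
    define R where "R = map (RW K s p) [0..<6]"
    have lenR: "length R = 6" by (simp add: R_def)
    have Rk: "k < 6 \<Longrightarrow> R!k = RW K s p k" for k by (simp add: R_def)
    have lRk: "k < 6 \<Longrightarrow> length (R!k) = 6" for k by (simp add: Rk RW_len)
    have colR: "j < 6 \<Longrightarrow> colk j R = CL K s p j" for j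
    proof -
      assume j: "j < 6"
      have "colk j R = map (\<lambda>k. K (s (e6!k)) (p (e6!j))) [0..<6]"
        unfolding colk_def R_def using j by (simp add: RW_nth)
      also have "\<dots> = map (\<lambda>u. K (s u) (p (e6!j))) (map (\<lambda>k. e6!k) [0..<6])" by simp
      also have "map (\<lambda>k. e6!k) [0..<6] = e6" using e6_len by (metis map_nth)
      finally show ?thesis by (simp add: CL_def)
    qed
    have Rkl: "k < 6 \<Longrightarrow> l < 6 \<Longrightarrow> R!k!l = K (s (e6!k)) (p (e6!l))" for k l
      by (simp add: Rk RW_nth)
    have rowsum: "sum_list (map2 (\<lambda>x y. val a x * cnj (val a y)) (R!k) (R!l)) = 0"
      if kl: "k < 6" "l < 6" "k \<noteq> l" for k l
    proof -
      let ?x = "s (e6!k)" and ?y = "s (e6!l)"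
      have ee: "e6!k \<noteq> e6!l" using e6_inj kl by simp
      have xy: "?x \<noteq> ?y" using ee bij_is_inj[OF bs] by (simp add: inj_eq)
      have "sum_list (map2 (\<lambda>x y. val a x * cnj (val a y)) (R!k) (R!l))
          = sum_list (map (\<lambda>j. H$?x$(p j) * cnj (H$?y$(p j))) e6)"
        using kl by (simp add: Rk RW_def sum_map2_map vK)
      also have "\<dots> = (\<Sum>j\<in>UNIV. H$?x$(p j) * cnj (H$?y$(p j)))" by (simp add: sum_e6)
      also have "\<dots> = (\<Sum>j\<in>UNIV. H$?x$j * cnj (H$?y$j))"
        by (rule sum.reindex_bij_betw[OF bp])
      also have "\<dots> = 0" by (rule had_rows[OF hh xy])
      finally show ?thesis .
    qed
    have colsum: "sum_list (map2 (\<lambda>x y. val a x * cnj (val a y)) (colk j R) (colk l R)) = 0"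
      if jl: "j < 6" "l < 6" "j \<noteq> l" for j l
    proof -
      let ?x = "p (e6!j)" and ?y = "p (e6!l)"
      have ee: "e6!j \<noteq> e6!l" using e6_inj jl by simp
      have xy: "?x \<noteq> ?y" using ee bij_is_inj[OF bp] by (simp add: inj_eq)
      have "sum_list (map2 (\<lambda>x y. val a x * cnj (val a y)) (colk j R) (colk l R))
          = sum_list (map (\<lambda>u. H$(s u)$?x * cnj (H$(s u)$?y)) e6)"
        using jl by (simp add: colR CL_def sum_map2_map vK)
      also have "\<dots> = (\<Sum>u\<in>UNIV. H$(s u)$?x * cnj (H$(s u)$?y))" by (simp add: sum_e6)
      also have "\<dots> = (\<Sum>i\<in>UNIV. H$i$?x * cnj (H$i$?y))"
        by (rule sum.reindex_bij_betw[OF bs])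
      also have "\<dots> = 0" by (rule had_cols[OF hh xy])
      finally show ?thesis .
    qed
    define m where "m = mof (Re a)"
    have rowc: "k < 6 \<Longrightarrow> l < 6 \<Longrightarrow> k \<noteq> l \<Longrightarrow> cond m (R!k) (R!l) \<and>
       (Re a \<noteq> 0 \<and> Re a \<noteq> 1/2 \<and> Re a \<noteq> -1/2 \<longrightarrow> fst (snd (st (R!k) (R!l))) = 0)" for k l
      unfolding m_def using pair_cond[OF rowsum _ _ aa im re1] lRk by blast
    have colc: "j < 6 \<Longrightarrow> l < 6 \<Longrightarrow> j \<noteq> l \<Longrightarrow> cond m (colk j R) (colk l R)" for j l
      unfolding m_def using pair_cond[OF colsum _ _ aa im re1] colR CL_len by metis
    have step: "lexless (R!k) (R!Suc k)" if k: "k < 5" for k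
    proof -
      have "\<not> lexless (R!Suc k) (R!k)" using rws k Rk by simp
      moreover have "R!k \<noteq> R!Suc k"
      proof
        assume "R!k = R!Suc k"
        then have "cond m (R!k) (R!k)" using rowc[of k "Suc k"] k by simp
        moreover have "R!k \<noteq> []" using lRk[of k] k by auto
        ultimately show False using cond_same by blast
      qed
      moreover have "length (R!k) = length (R!Suc k)" using lRk k by simp
      ultimately show ?thesis using lexless_total by blast
    qed
    have inc: "lexless (R!i) (R!j) \<and> cond m (R!i) (R!j)" if "i < j" "j < 6" for i j
      using lexless_chain[of R, OF step] that rowc[of i j] by simp
    have cok: "colok R"
      unfolding colok_def colokL_iff using cls colR by (auto simp: numeral_eq_Suc)
    have Rin: "R \<in> set (topS m)"
      by (rule srch_sound[OF inc cok colc lenR lRk]) auto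
    consider "Re a = -1/2" | "Re a = 1/2" | "Re a \<noteq> -1/2 \<and> Re a \<noteq> 1/2" by blast
    then show ?thesis
    proof cases
      case 1 then have "m = 1" by (simp add: m_def mof_def)
      then show ?thesis using Rin topS_vals by simp
    next
      case 2 then have "m = -1" by (simp add: m_def mof_def)
      then show ?thesis using Rin topS_vals by simp
    next
      case 3 then have "m = 0" by (simp add: m_def mof_def)
      then have Rs: "R \<in> set sols0" using Rin topS_vals by simp
      show ?thesis
      proof (cases "Re a = 0")
        case False
        obtain k l where "k < 6" "l < 6" "k \<noteq> l" "fst (snd (st (R!k) (R!l))) \<noteq> 0"
          using sols0_B[OF Rs] by blast
        then show ?thesis using rowc 3 False by blast
      next
        case True
        then have "(Im a)^2 = 1" using sq by simp
        then have "Im a = 1 \<or> Im a = -1" by (metis power2_eq_1_iff)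
        then have ai: "a = \<i> \<or> a = -\<i>" using True by (auto simp: complex_eq_iff)
        obtain sl ql d1 d2 where w: "wit a R sl ql d1 d2" using sols0_wit[OF Rs ai] by blast
        show ?thesis
        proof (rule wit_equiv[OF w bs bp])
          fix k l :: nat assume "k < 6" "l < 6"
          then show "H $ s (e6!k) $ p (e6!l) = val a (R!k!l)" by (simp add: Rkl vK)
        qed
      qed
    qed
  qed
qed


end
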